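(* Let $\mathcal X$ be a finite set and $x\mapsto W_x$ a map from $\mathcal X$ to pure states on a finite-dimensional Hilbert space $\mathcal H$. Let $0<\epsilon<1$ and $\delta_1,\delta_2>0$. Then $$\log M(\epsilon)\ \ge\ \max_P H_s^{\epsilon-\delta_1-\delta_2}(W_P)-\log\frac{1-\epsilon}{\delta_1\delta_2},\qquad \log M(\epsilon)\ \le\ \max_P H_s^{\epsilon+\delta_1+2\delta_2}(W_P)+\log\frac{1}{\delta_1\delta_2^2},$$ where the maxima are over probability distributions $P$ on $\mathcal X$.
   Context: $M(\epsilon)$ is the number of distinguishable states among $\{W_x\}_{x\in\mathcal X}$ with error probability $\epsilon$: the largest integer $N$ for which there exist $x_1,\dots,x_N\in\mathcal X$ and a POVM $\{\Pi_1,\dots,\Pi_N\}$ on $\mathcal H$ with $\frac1N\sum_{i=1}^N\mathrm{tr}\,W_{x_i}(I-\Pi_i)\le\epsilon$. For a distribution $P$, $W_P:=\sum_x P(x)W_x$. For a state $\rho$ and $\epsilon\in\mathbb R$, $H_s^{\epsilon}(\rho):=\max\{\lambda\in\mathbb R:\mathrm{tr}\,\rho\{\rho\ge e^{-\lambda}\}\le\epsilon\}$, where $\{\rho\ge e^{-\lambda}\}$ is the projection onto the span of eigenvectors of $\rho$ with eigenvalues $\ge e^{-\lambda}$. Logarithms are natural. *)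

theory Defs
  imports "HOL-Analysis.Analysis"
begin

text \<open>The Hilbert space H is modelled as complex^'n for an arbitrary finite type 'n
  (so dim H = CARD('n)); operators on H are matrices complex^'n^'n.\<close>

definition adj :: "complex^'n^'n \<Rightarrow> complex^'n^'n" where
  "adj A = (\<chi> i j. cnj (A $ j $ i))"

definition cinner :: "complex^'n \<Rightarrow> complex^'n \<Rightarrow> complex" where
  "cinner v w = (\<Sum>i\<in>UNIV. cnj (v $ i) * w $ i)"

definition outer :: "complex^'n \<Rightarrow> complex^'n \<Rightarrow> complex^'n^'n" where
  "outer v w = (\<chi> i j. v $ i * cnj (w $ j))"

text \<open>positive semidefinite operator\<close>
definition psd :: "complex^'n^'n \<Rightarrow> bool" where
  "psd A \<longleftrightarrow> (\<forall>v. \<exists>r::real. r \<ge> 0 \<and> cinner v (A *v v) = complex_of_real r)"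

text \<open>pure state: rank-one projector onto a unit vector\<close>
definition pure_state :: "complex^'n^'n \<Rightarrow> bool" where
  "pure_state W \<longleftrightarrow> (\<exists>v. norm v = 1 \<and> W = outer v v)"

text \<open>POVM with N elements Q 0, ..., Q (N-1)\<close>
definition povm :: "nat \<Rightarrow> (nat \<Rightarrow> complex^'n^'n) \<Rightarrow> bool" where
  "povm N Q \<longleftrightarrow> (\<forall>i<N. psd (Q i)) \<and> (\<Sum>i<N. Q i) = mat 1"

definition distinguishable ::
  "('x \<Rightarrow> complex^'n^'n) \<Rightarrow> 'x set \<Rightarrow> real \<Rightarrow> nat \<Rightarrow> bool" where
  "distinguishable W X eps N \<longleftrightarrow>
     (\<exists>xs Q. (\<forall>i<N. xs i \<in> X) \<and> povm N Q \<and>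
        (1 / real N) * (\<Sum>i<N. Re (trace (W (xs i) ** (mat 1 - Q i)))) \<le> eps)"

text \<open>M(eps): number of distinguishable states with error probability eps\<close>
definition Mdist :: "('x \<Rightarrow> complex^'n^'n) \<Rightarrow> 'x set \<Rightarrow> real \<Rightarrow> nat" where
  "Mdist W X eps = (GREATEST N. distinguishable W X eps N)"

text \<open>the projection {rho >= c} onto the span of the eigenvectors of rho
  with eigenvalues >= c\<close>
definition proj_ge :: "complex^'n^'n \<Rightarrow> real \<Rightarrow> complex^'n^'n" where
  "proj_ge rho c = (THE P. adj P = P \<and> P ** P = P \<and>
      range (\<lambda>v. P *v v) =
        module.span (*s) {v. \<exists>mu::real. mu \<ge> c \<and> rho *v v = complex_of_real mu *s v})"

text \<open>H_s^eps(rho) = max {lambda. tr rho {rho >= exp(-lambda)} <= eps},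
  taken as a supremum in the extended reals\<close>
definition Hs :: "real \<Rightarrow> complex^'n^'n \<Rightarrow> ereal" where
  "Hs eps rho = Sup {ereal lam | lam. Re (trace (rho ** proj_ge rho (exp (- lam)))) \<le> eps}"

definition distributions :: "'x set \<Rightarrow> ('x \<Rightarrow> real) set" where
  "distributions X = {P. (\<forall>x\<in>X. 0 \<le> P x) \<and> (\<Sum>x\<in>X. P x) = 1}"

definition mixture :: "('x \<Rightarrow> complex^'n^'n) \<Rightarrow> 'x set \<Rightarrow> ('x \<Rightarrow> real) \<Rightarrow> complex^'n^'n" where
  "mixture W X P = (\<Sum>x\<in>X. P x *\<^sub>R W x)"

end

theory Submission
  imports Defs
begin

(* ---- part 1 ---- *)
lemma cinner_add_right: "cinner v (w + z) = cinner v w + cinner v z"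
  by (simp add: cinner_def distrib_left sum.distrib)
lemma cinner_add_left: "cinner (v + w) z = cinner v z + cinner w z"
  by (simp add: cinner_def distrib_right sum.distrib)
lemma cinner_diff_right: "cinner v (w - z) = cinner v w - cinner v z"
  by (simp add: cinner_def right_diff_distrib sum_subtractf)
lemma cinner_diff_left: "cinner (v - w) z = cinner v z - cinner w z"
  by (simp add: cinner_def left_diff_distrib sum_subtractf)
lemma cinner_scale_right: "cinner v (a *s w) = a * cinner v w"
  by (simp add: cinner_def sum_distrib_left algebra_simps)
lemma cinner_scale_left: "cinner (a *s v) w = cnj a * cinner v w"
  by (simp add: cinner_def sum_distrib_left algebra_simps)
lemma cinner_zero_right[simp]: "cinner v 0 = 0"
  by (simp add: cinner_def)
lemma cinner_zero_left[simp]: "cinner 0 v = 0"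
  by (simp add: cinner_def)
lemma cinner_sum_right: "cinner v (sum f S) = (\<Sum>x\<in>S. cinner v (f x))"
  by (induction S rule: infinite_finite_induct) (auto simp: cinner_add_right)
lemma cinner_sum_left: "cinner (sum f S) v = (\<Sum>x\<in>S. cinner (f x) v)"
  by (induction S rule: infinite_finite_induct) (auto simp: cinner_add_left)
lemma cinner_commute: "cinner v w = cnj (cinner w v)"
  by (simp add: cinner_def mult.commute)
lemma cinner_neg_right: "cinner v (- w) = - cinner v w"
  by (simp add: cinner_def sum_negf)

lemma Re_cinner: "Re (cinner v w) = inner v w"
  by (simp add: cinner_def inner_vec_def inner_complex_def Re_sum)

lemma Im_cinner_self: "Im (cinner v v) = 0"
  by (simp add: cinner_def Im_sum)

lemma cinner_self: "cinner v v = complex_of_real ((norm v)^2)"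
proof -
  have "Re (cinner v v) = (norm v)^2" by (simp add: Re_cinner power2_norm_eq_inner)
  then show ?thesis using Im_cinner_self by (simp add: complex_eq_iff)
qed

lemma cinner_self_eq_0: "cinner v v = 0 \<longleftrightarrow> v = 0"
  by (simp add: cinner_self)

lemma outer_mult: "outer a b *v v = cinner b v *s a"
  by (simp add: outer_def matrix_vector_mult_def cinner_def vec_eq_iff sum_distrib_left algebra_simps)

lemma matrix_vector_add_left: "(A + B) *v v = A *v v + B *v v"
  by (simp add: matrix_vector_mult_def vec_eq_iff distrib_right sum.distrib)
lemma matrix_vector_diff_left: "(A - B) *v v = A *v v - B *v (v::complex^'n)"
  by (simp add: matrix_vector_mult_def vec_eq_iff left_diff_distrib sum_subtractf)
lemma matrix_vector_sum_left: "(sum f S) *v v = (\<Sum>x\<in>S. f x *v v)"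
  by (induction S rule: infinite_finite_induct) (auto simp: matrix_vector_add_left)
lemma matrix_vector_scaleR_left: "(r *\<^sub>R A) *v v = complex_of_real r *s (A *v (v::complex^'n))"
  by (simp add: matrix_vector_mult_def vec_eq_iff sum_distrib_left algebra_simps)
     (simp add: scaleR_conv_of_real algebra_simps)
lemma matrix_vector_zero_left[simp]: "(0::complex^'n^'n) *v v = 0"
  by (simp add: matrix_vector_mult_def vec_eq_iff)
lemma matrix_vector_add_right: "A *v (v + w) = A *v v + A *v (w::complex^'n)"
  by (simp add: matrix_vector_right_distrib)
lemma matrix_vector_scale_right: "A *v (a *s v) = a *s (A *v (v::complex^'n))"
  by (simp add: matrix_vector_mult_def vec_eq_iff sum_distrib_left algebra_simps)
lemma matrix_vector_diff_right: "A *v (v - w) = A *v v - A *v (w::complex^'n)"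
  by (simp add: matrix_vector_mult_def vec_eq_iff sum_subtractf right_diff_distrib)
lemma matrix_vector_sum_right: "A *v (sum f S) = (\<Sum>x\<in>S. A *v (f x::complex^'n))"
  by (induction S rule: infinite_finite_induct) (auto simp: matrix_vector_add_right)

lemma trace_outer_mult: "trace (outer a b ** A) = cinner b (A *v a)"
  by (simp add: trace_def outer_def matrix_matrix_mult_def cinner_def matrix_vector_mult_def
      sum_distrib_left algebra_simps) (subst sum.swap, simp add: algebra_simps)

lemma trace_mult_outer: "trace (A ** outer a b) = cinner b (A *v a)"
  by (simp add: trace_def outer_def matrix_matrix_mult_def cinner_def matrix_vector_mult_def
      sum_distrib_left algebra_simps)

lemma trace_add: "trace (A + B) = trace A + trace (B::complex^'n^'n)"
  by (simp add: trace_def sum.distrib)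

lemma trace_mult_add_right: "trace (A ** (B + C)) = trace (A ** B) + trace (A ** (C::complex^'n^'n))"
  by (simp add: trace_def matrix_matrix_mult_def distrib_left sum.distrib)
lemma trace_mult_add_left: "trace ((B + C) ** A) = trace (B ** A) + trace (C ** (A::complex^'n^'n))"
  by (simp add: trace_def matrix_matrix_mult_def distrib_right sum.distrib)
lemma trace_zero'[simp]: "trace (0::complex^'n^'n) = 0"
  by (simp add: trace_def)
lemma trace_mult_zero[simp]: "trace (A ** (0::complex^'n^'n)) = 0" "trace ((0::complex^'n^'n) ** A) = 0"
  by (simp_all add: trace_def matrix_matrix_mult_def)

lemma trace_mult_sum_right: "trace (A ** sum f S) = (\<Sum>x\<in>S. trace (A ** (f x::complex^'n^'n)))"
  by (induction S rule: infinite_finite_induct) (auto simp: trace_mult_add_right)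

lemma trace_mult_sum_left: "trace (sum f S ** A) = (\<Sum>x\<in>S. trace (f x ** (A::complex^'n^'n)))"
  by (induction S rule: infinite_finite_induct) (auto simp: trace_mult_add_left)

lemma trace_scaleR_left: "trace ((r *\<^sub>R A) ** B) = complex_of_real r * trace (A ** (B::complex^'n^'n))"
  by (simp add: trace_def matrix_matrix_mult_def sum_distrib_left) (simp add: scaleR_conv_of_real algebra_simps)

lemma mat1_mult: "mat 1 *v v = (v::complex^'n)"
  by simp

(* ---- part 2 ---- *)
definition orthonormal :: "(complex^'n) set \<Rightarrow> bool" where
  "orthonormal B \<longleftrightarrow> (\<forall>u\<in>B. \<forall>v\<in>B. cinner u v = (if u = v then 1 else 0))"

lemma orthonormalD: "orthonormal B \<Longrightarrow> u \<in> B \<Longrightarrow> v \<in> B \<Longrightarrow> cinner u v = (if u = v then 1 else 0)"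
  unfolding orthonormal_def by blast

lemma orthonormal_independent:
  assumes "orthonormal B" shows "vec.independent B"
  unfolding vec.independent_explicit_module
proof (intro allI impI)
  fix t u v assume t: "finite t" "t \<subseteq> B" "(\<Sum>v\<in>t. u v *s v) = 0" "v \<in> t"
  have "0 = cinner v (\<Sum>w\<in>t. u w *s w)" using t by simp
  also have "\<dots> = (\<Sum>w\<in>t. u w * cinner v w)" by (simp add: cinner_sum_right cinner_scale_right)
  also have "\<dots> = (\<Sum>w\<in>t. if w = v then u w else 0)"
    using orthonormalD[OF assms, of v] t by (intro sum.cong) (auto simp: subset_iff)
  also have "\<dots> = u v" using t by simp
  finally show "u v = 0" by simp
qed

lemma orthonormal_finite: "orthonormal B \<Longrightarrow> finite B"
  using orthonormal_independent vec.finiteI_independent by blast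

lemma orthonormal_card: assumes "orthonormal (B::(complex^'n) set)" shows "card B \<le> CARD('n)"
proof -
  have "card B \<le> vec.dim (UNIV :: (complex^'n) set)"
    using orthonormal_independent[OF assms] vec.independent_card_le_dim[of B UNIV] by simp
  then show ?thesis using vec_dim_card[where 'a=complex and 'n='n] by linarith
qed

lemma orthonormal_subset: "orthonormal B \<Longrightarrow> C \<subseteq> B \<Longrightarrow> orthonormal C"
  unfolding orthonormal_def by blast

lemma cinner_orthonormal_sum:
  assumes "orthonormal B" "f \<in> B" "F \<subseteq> B" "finite F"
  shows "cinner f (\<Sum>g\<in>F. c g *s g) = (if f \<in> F then c f else 0)"
proof -
  have "cinner f (\<Sum>g\<in>F. c g *s g) = (\<Sum>g\<in>F. c g * cinner f g)"
    by (simp add: cinner_sum_right cinner_scale_right)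
  also have "\<dots> = (\<Sum>g\<in>F. if g = f then c g else 0)"
    using assms unfolding orthonormal_def by (intro sum.cong) auto
  also have "\<dots> = (if f \<in> F then c f else 0)" using assms(4) by simp
  finally show ?thesis .
qed

lemma cinner_sum_orthonormal_sum:
  assumes "orthonormal B" "F \<subseteq> B"
  shows "cinner (\<Sum>f\<in>F. a f *s f) (\<Sum>g\<in>F. c g *s g) = (\<Sum>f\<in>F. cnj (a f) * c f)"
proof -
  have fin: "finite F" using assms orthonormal_finite finite_subset by blast
  have "cinner (\<Sum>f\<in>F. a f *s f) (\<Sum>g\<in>F. c g *s g) = (\<Sum>f\<in>F. cnj (a f) * cinner f (\<Sum>g\<in>F. c g *s g))"
    by (simp add: cinner_sum_left cinner_scale_left)
  also have "\<dots> = (\<Sum>f\<in>F. cnj (a f) * c f)"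
    using cinner_orthonormal_sum[OF assms(1) _ assms(2) fin] assms(2) by (intro sum.cong) auto
  finally show ?thesis .
qed

definition resid :: "(complex^'n) set \<Rightarrow> complex^'n \<Rightarrow> complex^'n" where
  "resid F v = v - (\<Sum>f\<in>F. cinner f v *s f)"

lemma cinner_resid:
  assumes "orthonormal F" "f \<in> F" shows "cinner f (resid F v) = 0"
  using cinner_orthonormal_sum[OF assms(1) assms(2) order_refl orthonormal_finite[OF assms(1)]] assms(2)
  by (simp add: resid_def cinner_diff_right)

lemma norm_sq_cmod: "cnj z * z = complex_of_real ((cmod z)^2)"
  by (metis complex_norm_square mult.commute of_real_power)

lemma pythagoras:
  assumes "orthonormal F"
  shows "(norm v)^2 = (\<Sum>f\<in>F. (cmod (cinner f v))^2) + (norm (resid F v))^2"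
proof -
  let ?p = "\<Sum>f\<in>F. cinner f v *s f" let ?r = "resid F v"
  have fin: "finite F" using assms orthonormal_finite by blast
  have v: "v = ?p + ?r" by (simp add: resid_def)
  have pr: "cinner ?p ?r = 0"
    by (simp add: cinner_sum_left cinner_scale_left cinner_resid[OF assms])
  have rp: "cinner ?r ?p = 0" using pr cinner_commute[of ?r ?p] by simp
  have pp: "cinner ?p ?p = (\<Sum>f\<in>F. complex_of_real ((cmod (cinner f v))^2))"
    using cinner_sum_orthonormal_sum[OF assms order_refl] by (simp add: norm_sq_cmod)
  have "cinner v v = cinner ?p ?p + cinner ?r ?r"
    by (subst (1 2) v) (simp add: cinner_add_left cinner_add_right pr rp)
  then have "cinner v v = (\<Sum>f\<in>F. complex_of_real ((cmod (cinner f v))^2)) + cinner ?r ?r"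
    using pp by simp
  then have "complex_of_real ((norm v)^2) = complex_of_real ((\<Sum>f\<in>F. (cmod (cinner f v))^2) + (norm ?r)^2)"
    by (simp add: cinner_self)
  then show ?thesis using of_real_eq_iff by blast
qed

lemma bessel:
  assumes "orthonormal F"
  shows "(\<Sum>f\<in>F. (cmod (cinner f v))^2) \<le> (norm v)^2"
  using pythagoras[OF assms, of v] by simp

(* ---- part 3 ---- *)
definition herm :: "complex^'n^'n \<Rightarrow> bool" where
  "herm A \<longleftrightarrow> (\<forall>x y. cinner x (A *v y) = cnj (cinner y (A *v x)))"

lemma norm_smult: "norm (a *s (v::complex^'n)) = cmod a * norm v"
  unfolding norm_vec_def by (simp add: norm_mult L2_set_right_distrib)

lemma Re_ofreal_mult: "Re (complex_of_real t * z) = t * Re z"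
  by simp

lemma eigen_in_perp:
  fixes A :: "complex^'n^'n"
  assumes herm: "herm A" and eig: "\<forall>u\<in>B. \<exists>l::real. A *v u = complex_of_real l *s u"
    and r: "\<forall>u\<in>B. cinner u r = 0" "r \<noteq> 0"
  shows "\<exists>w. (\<forall>u\<in>B. cinner u w = 0) \<and> norm w = 1 \<and> (\<exists>l::real. A *v w = complex_of_real l *s w)"
proof -
  define U where "U = {v. \<forall>u\<in>B. cinner u v = 0}"
  have Uadd: "x + y \<in> U" if "x \<in> U" "y \<in> U" for x y
    using that by (simp add: U_def cinner_add_right)
  have Uscale: "a *s x \<in> U" if "x \<in> U" for a x
    using that by (simp add: U_def cinner_scale_right)
  have Uinv: "A *v x \<in> U" if "x \<in> U" for x
  proof -
    { fix u assume u: "u \<in> B"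
      then obtain l :: real where l: "A *v u = complex_of_real l *s u" using eig by blast
      have "cinner u (A *v x) = cnj (cinner x (A *v u))" using herm unfolding herm_def by blast
      also have "\<dots> = complex_of_real l * cnj (cinner x u)" by (simp add: l cinner_scale_right)
      also have "\<dots> = complex_of_real l * cinner u x" by (simp add: cinner_commute[of u x])
      also have "\<dots> = 0" using that u by (simp add: U_def)
      finally have "cinner u (A *v x) = 0" . }
    then show ?thesis by (simp add: U_def)
  qed
  have closedU: "closed U"
  proof -
    have "U = (\<Inter>u\<in>B. {v. cinner u v = 0})" by (auto simp: U_def)
    moreover have "closed {v. cinner u v = 0}" for u :: "complex^'n"
      by (rule closed_Collect_eq) (unfold cinner_def, intro continuous_intros, rule continuous_on_const)
    ultimately show ?thesis by auto
  qed
  define K where "K = sphere (0::complex^'n) 1 \<inter> U"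
  have compK: "compact K" unfolding K_def by (rule compact_Int_closed[OF compact_sphere closedU])
  define r1 where "r1 = complex_of_real (1 / norm r) *s r"
  have "r \<in> U" using r by (simp add: U_def)
  then have "r1 \<in> K" using r(2) by (simp add: K_def r1_def Uscale norm_smult norm_divide)
  then have Kne: "K \<noteq> {}" by blast
  define f where "f = (\<lambda>v. Re (cinner v (A *v v)))"
  have contf: "continuous_on K f"
    unfolding f_def cinner_def by (intro continuous_intros matrix_vector_mult_linear_continuous_on)
  obtain w where wK: "w \<in> K" and wmax: "\<forall>y\<in>K. f y \<le> f w"
    using continuous_attains_sup[OF compK Kne contf] by blast
  define lam where "lam = f w"
  have fscale: "f (complex_of_real c *s x) = c^2 * f x" for c x
    by (simp add: f_def matrix_vector_scale_right cinner_scale_left cinner_scale_right power2_eq_square)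
  have claim1: "f x \<le> lam * (norm x)^2" if "x \<in> U" for x
  proof (cases "x = 0")
    case True then show ?thesis by (simp add: f_def)
  next
    case False
    define y where "y = complex_of_real (1 / norm x) *s x"
    have "y \<in> K" using False that by (simp add: K_def y_def Uscale norm_smult norm_divide)
    then have "f y \<le> lam" using wmax by (simp add: lam_def)
    moreover have "f y = (1 / norm x)^2 * f x" unfolding y_def by (rule fscale)
    ultimately show ?thesis using False by (simp add: field_simps)
  qed
  define g where "g = (\<lambda>y. A *v y - complex_of_real lam *s y)"
  have glin: "g (x + complex_of_real t *s y) = g x + complex_of_real t *s g y" for x y t
    by (simp add: g_def matrix_vector_add_right matrix_vector_scale_right algebra_simps)
  have gU: "g y \<in> U" if "y \<in> U" for y
    using that Uinv Uscale by (simp add: g_def U_def cinner_diff_right)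
  define h where "h = (\<lambda>x. Re (cinner x (g x)))"
  have hle: "h x \<le> 0" if "x \<in> U" for x
  proof -
    have "h x = f x - lam * (norm x)^2"
      by (simp add: h_def f_def g_def cinner_diff_right cinner_scale_right cinner_self)
    then show ?thesis using claim1[OF that] by simp
  qed
  have wU: "w \<in> U" and wn: "norm w = 1" using wK by (auto simp: K_def)
  have hw: "h w = 0"
    by (simp add: h_def lam_def f_def g_def cinner_diff_right cinner_scale_right cinner_self wn)
  define z where "z = g w"
  have zU: "z \<in> U" using gU wU by (simp add: z_def)
  have hh: "cinner w (A *v z) = cnj (cinner z (A *v w))" using herm unfolding herm_def by blast
  have gherm: "cinner w (g z) = cnj (cinner z (g w))"
    by (simp add: g_def hh cinner_diff_right cinner_scale_right cinner_commute[of w z])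
  define a where "a = Re (cinner z (g w))"
  define b where "b = h z"
  have b0: "b \<le> 0" using hle zU by (simp add: b_def)
  have expand: "h (w + complex_of_real t *s z) = 2 * t * a + t^2 * b" for t
  proof -
    have "cinner (w + complex_of_real t *s z) (g (w + complex_of_real t *s z)) =
      cinner w (g w) + complex_of_real t * cinner w (g z) + complex_of_real t * cinner z (g w)
      + complex_of_real t * complex_of_real t * cinner z (g z)"
      by (simp add: glin cinner_add_left cinner_add_right cinner_scale_left cinner_scale_right algebra_simps)
    then have "h (w + complex_of_real t *s z) = h w + t * Re (cinner w (g z)) + t * a + t * t * b"
      by (simp add: h_def a_def b_def)
    then show ?thesis using hw gherm by (simp add: a_def power2_eq_square)
  qed
  have "a = 0"
  proof (rule ccontr)
    assume a0: "a \<noteq> 0"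
    define c where "c = 1 / (1 - b)"
    have pos: "1 - b > 0" using b0 by simp
    have cpos: "c > 0" using pos by (simp add: c_def)
    have cb: "c * b > -1" using pos b0 by (simp add: c_def field_simps)
    have "h (w + complex_of_real (a * c) *s z) \<le> 0" using hle Uadd Uscale wU zU by blast
    then have "2 * (a * c) * a + (a * c)^2 * b \<le> 0" by (simp only: expand)
    moreover have "2 * (a * c) * a + (a * c)^2 * b = a^2 * c * (2 + c * b)"
      by (simp add: power2_eq_square algebra_simps)
    ultimately have "a^2 * c * (2 + c * b) \<le> 0" by simp
    moreover have "a^2 * c * (2 + c * b) > 0"
      using a0 cpos cb by (intro mult_pos_pos) auto
    ultimately show False by simp
  qed
  then have "Re (cinner z z) = 0" by (simp add: a_def z_def)
  then have "z = 0" by (simp add: cinner_self)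
  then have "A *v w = complex_of_real lam *s w" by (simp add: z_def g_def)
  then show ?thesis using wU wn by (auto simp: U_def)
qed

lemma spectral:
  fixes A :: "complex^'n^'n"
  assumes herm: "herm A"
  shows "\<exists>B lam. orthonormal B \<and> (\<forall>u\<in>B. A *v u = complex_of_real (lam u) *s u) \<and> (\<forall>v. resid B v = 0)"
proof -
  define P where "P = (\<lambda>B::(complex^'n) set. orthonormal B \<and> (\<forall>u\<in>B. \<exists>l::real. A *v u = complex_of_real l *s u))"
  have P0: "P {}" by (simp add: P_def orthonormal_def)
  have bnd: "\<forall>B. P B \<longrightarrow> card B < CARD('n) + 1" using orthonormal_card by (auto simp: P_def less_Suc_eq_le)
  obtain B where PB: "P B" and Bmax: "\<forall>C. P C \<longrightarrow> card C \<le> card B"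
    using ex_has_greatest_nat[of P "{}" card "CARD('n) + 1", OF P0 bnd] by blast
  have on: "orthonormal B" using PB by (simp add: P_def)
  have fin: "finite B" using on orthonormal_finite by blast
  have res: "resid B v = 0" for v
  proof (rule ccontr)
    assume nz: "resid B v \<noteq> 0"
    have "\<forall>u\<in>B. cinner u (resid B v) = 0" using cinner_resid[OF on] by blast
    then obtain w where w: "\<forall>u\<in>B. cinner u w = 0" "norm w = 1" "\<exists>l::real. A *v w = complex_of_real l *s w"
      using eigen_in_perp[OF herm, of B "resid B v"] nz PB by (auto simp: P_def)
    have ww: "cinner w w = 1" using w(2) by (simp add: cinner_self)
    have wB: "w \<notin> B" using w(1) ww by force
    have "orthonormal (insert w B)"
      unfolding orthonormal_def
    proof (intro ballI)
      fix x y assume "x \<in> insert w B" "y \<in> insert w B"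
      then show "cinner x y = (if x = y then 1 else 0)"
        using orthonormalD[OF on] w(1) ww wB cinner_commute[of w y] by auto
    qed
    then have "P (insert w B)" using PB w(3) by (auto simp: P_def)
    then have "card (insert w B) \<le> card B" using Bmax by blast
    then show False using wB fin by simp
  qed
  define lam where "lam = (\<lambda>u. SOME l::real. A *v u = complex_of_real l *s u)"
  have "\<forall>u\<in>B. A *v u = complex_of_real (lam u) *s u"
    using PB unfolding P_def lam_def by (metis (mono_tags, lifting) someI)
  then show ?thesis using on res by blast
qed

(* ---- part 4 ---- *)
lemma cinner_adj: "cinner x (M *v y) = cinner (adj M *v x) y"
  by (simp add: cinner_def adj_def matrix_vector_mult_def sum_distrib_left sum_distrib_right algebra_simps)
     (subst sum.swap, simp add: algebra_simps)

lemma adj_outer: "adj (outer u u) = outer u u"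
  by (simp add: adj_def outer_def vec_eq_iff mult.commute)

lemma adj_sum: "adj (sum f S) = (\<Sum>x\<in>S. adj (f x))"
  by (simp add: adj_def vec_eq_iff sum_component cnj_sum)

lemma proj_unique:
  fixes P Q :: "complex^'n^'n"
  assumes "adj P = P" "P ** P = P" "adj Q = Q" "Q ** Q = Q"
    and "range (\<lambda>v. P *v v) = range (\<lambda>v. Q *v v)"
  shows "P = Q"
proof -
  have orth: "cinner y (v - M *v v) = 0" if h: "adj M = M" "M ** M = M" "y \<in> range (\<lambda>v. M *v v)" for M :: "complex^'n^'n" and y v
  proof -
    obtain w where y: "y = M *v w" using h(3) by blast
    have "cinner y (v - M *v v) = cinner w (M *v (v - M *v v))"
      by (simp add: y cinner_adj h(1))
    also have "\<dots> = 0"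
      by (simp add: matrix_vector_diff_right matrix_vector_mul_assoc h(2))
    finally show ?thesis .
  qed
  have "P *v v = Q *v v" for v
  proof -
    define d where "d = P *v v - Q *v v"
    obtain w where w: "Q *v v = P *v w" using assms(5) by (metis rangeE rangeI)
    have dP: "d \<in> range (\<lambda>v. P *v v)" by (simp add: d_def w matrix_vector_diff_right[symmetric])
    then have dQ: "d \<in> range (\<lambda>v. Q *v v)" using assms(5) by simp
    have "d = (v - Q *v v) - (v - P *v v)" by (simp add: d_def)
    then have "cinner d d = cinner d (v - Q *v v) - cinner d (v - P *v v)"
      by (metis cinner_diff_right)
    also have "\<dots> = 0" using orth[OF assms(1,2) dP] orth[OF assms(3,4) dQ] by simp
    finally show ?thesis by (simp add: cinner_self_eq_0 d_def)
  qed
  then show ?thesis by (simp add: matrix_eq)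
qed

definition projS :: "(complex^'n) set \<Rightarrow> complex^'n^'n" where
  "projS S = (\<Sum>u\<in>S. outer u u)"

lemma projS_mult: "projS S *v v = (\<Sum>u\<in>S. cinner u v *s u)"
  by (simp add: projS_def matrix_vector_sum_left outer_mult)

lemma projS_adj: "adj (projS S) = projS S"
  by (simp add: projS_def adj_sum adj_outer)

lemma projS_idem:
  assumes "orthonormal B" "S \<subseteq> B" shows "projS S ** projS S = projS S"
proof -
  have fin: "finite S" using assms orthonormal_finite finite_subset by blast
  have "projS S *v (projS S *v v) = projS S *v v" for v
  proof -
    have "projS S *v (projS S *v v) = (\<Sum>u\<in>S. cinner u (\<Sum>u'\<in>S. cinner u' v *s u') *s u)"
      by (simp add: projS_mult)
    also have "\<dots> = (\<Sum>u\<in>S. cinner u v *s u)"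
      using cinner_orthonormal_sum[OF assms(1) _ assms(2) fin] assms(2) by (intro sum.cong) auto
    finally show ?thesis by (simp add: projS_mult)
  qed
  then show ?thesis by (simp add: matrix_eq matrix_vector_mul_assoc)
qed

lemma trace_projS: "trace (A ** projS S) = (\<Sum>u\<in>S. cinner u (A *v u))"
  by (simp add: projS_def trace_mult_sum_right trace_mult_outer)

lemma proj_ge_eq:
  fixes A :: "complex^'n^'n"
  assumes herm: "herm A" and on: "orthonormal B"
    and eig: "\<forall>u\<in>B. A *v u = complex_of_real (lam u) *s u" and res: "\<forall>v. resid B v = 0"
  shows "proj_ge A c = projS {u\<in>B. lam u \<ge> c}"
proof -
  define S where "S = {u\<in>B. lam u \<ge> c}"
  define P where "P = projS S"
  define E where "E = {v. \<exists>mu::real. mu \<ge> c \<and> A *v v = complex_of_real mu *s v}"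
  have SB: "S \<subseteq> B" by (auto simp: S_def)
  have finB: "finite B" using on orthonormal_finite by blast
  have fin: "finite S" using finB SB finite_subset by blast
  have idem: "P ** P = P" using projS_idem[OF on SB] by (simp add: P_def)
  have adjP: "adj P = P" by (simp add: P_def projS_adj)
  have fix_range: "range (\<lambda>v. P *v v) = {v. P *v v = v}"
  proof
    show "range (\<lambda>v. P *v v) \<subseteq> {v. P *v v = v}"
      using idem by (auto simp: matrix_vector_mul_assoc)
    show "{v. P *v v = v} \<subseteq> range (\<lambda>v. P *v v)" by (auto, metis rangeI)
  qed
  have sub: "vec.subspace {v. P *v v = v}"
    unfolding vec.subspace_def
    by (auto simp: matrix_vector_add_right matrix_vector_scale_right)
  have E_fix: "E \<subseteq> {v. P *v v = v}"
  proof
    fix v assume "v \<in> E"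
    then obtain mu :: real where mu: "mu \<ge> c" "A *v v = complex_of_real mu *s v" by (auto simp: E_def)
    have zero: "cinner u v = 0" if "u \<in> B" "u \<notin> S" for u
    proof -
      have lu: "lam u < c" using that by (auto simp: S_def)
      have "complex_of_real mu * cinner u v = cinner u (A *v v)" by (simp add: mu cinner_scale_right)
      also have "\<dots> = cnj (cinner v (A *v u))" using herm unfolding herm_def by blast
      also have "\<dots> = complex_of_real (lam u) * cinner u v"
        using eig that(1) by (simp add: cinner_scale_right cinner_commute[of u v])
      finally have "complex_of_real (mu - lam u) * cinner u v = 0" by (simp add: algebra_simps)
      moreover have "mu - lam u \<noteq> 0" using lu mu by simp
      ultimately show ?thesis by simp
    qed
    have "P *v v = (\<Sum>u\<in>S. cinner u v *s u)" by (simp add: P_def projS_mult)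
    also have "\<dots> = (\<Sum>u\<in>B. cinner u v *s u)"
      using zero SB finB by (intro sum.mono_neutral_left) auto
    also have "\<dots> = v" using res by (simp add: resid_def)
    finally show "v \<in> {v. P *v v = v}" by simp
  qed
  have S_E: "S \<subseteq> E"
    using eig by (auto simp: S_def E_def)
  have range_eq: "range (\<lambda>v. P *v v) = vec.span E"
  proof
    show "vec.span E \<subseteq> range (\<lambda>v. P *v v)"
      unfolding fix_range using vec.span_minimal[OF E_fix sub] .
    show "range (\<lambda>v. P *v v) \<subseteq> vec.span E"
    proof
      fix y assume "y \<in> range (\<lambda>v. P *v v)"
      then obtain v where y: "y = P *v v" by blast
      have "(\<Sum>u\<in>S. cinner u v *s u) \<in> vec.span E"
        using S_E by (intro vec.span_sum vec.span_scale vec.span_base) auto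
      then show "y \<in> vec.span E" by (simp add: y P_def projS_mult)
    qed
  qed
  have "proj_ge A c = P"
    unfolding proj_ge_def
    apply (rule the_equality)
    subgoal using adjP idem range_eq by (simp add: E_def)
    subgoal for Q using proj_unique[of Q P] adjP idem range_eq by (simp add: E_def)
    done
  then show ?thesis by (simp add: P_def S_def)
qed

lemma trace_proj_ge:
  fixes A :: "complex^'n^'n"
  assumes herm: "herm A" and on: "orthonormal B"
    and eig: "\<forall>u\<in>B. A *v u = complex_of_real (lam u) *s u" and res: "\<forall>v. resid B v = 0"
  shows "Re (trace (A ** proj_ge A c)) = (\<Sum>u\<in>{u\<in>B. lam u \<ge> c}. lam u)"
proof -
  have "trace (A ** proj_ge A c) = (\<Sum>u\<in>{u\<in>B. lam u \<ge> c}. cinner u (A *v u))"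
    by (simp add: proj_ge_eq[OF assms] trace_projS)
  also have "\<dots> = (\<Sum>u\<in>{u\<in>B. lam u \<ge> c}. complex_of_real (lam u))"
    using eig orthonormalD[OF on] by (intro sum.cong) (auto simp: cinner_scale_right)
  finally show ?thesis by (simp add: Re_sum)
qed

(* ---- part 5 ---- *)
definition qf :: "complex^'n^'n \<Rightarrow> complex^'n \<Rightarrow> real" where
  "qf Q v = Re (cinner v (Q *v v))"

definition cr :: "complex^'n^'n \<Rightarrow> complex^'n \<Rightarrow> complex^'n \<Rightarrow> real" where
  "cr Q y z = Re (cinner y (Q *v z)) + Re (cinner z (Q *v y))"

lemma qf_nonneg: "psd Q \<Longrightarrow> qf Q v \<ge> 0"
  unfolding psd_def qf_def by (metis Re_complex_of_real)

lemma qf_add: "qf Q (y + z) = qf Q y + qf Q z + cr Q y z"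
  by (simp add: qf_def cr_def matrix_vector_add_right cinner_add_left cinner_add_right)

lemma qf_scale: "qf Q (a *s y) = (cmod a)^2 * qf Q y"
proof -
  have "cinner (a *s y) (Q *v (a *s y)) = (cnj a * a) * cinner y (Q *v y)"
    by (simp add: matrix_vector_scale_right cinner_scale_left cinner_scale_right)
  then show ?thesis by (simp add: qf_def norm_sq_cmod)
qed

lemma qf_diff: "qf Q (complex_of_real t *s y - z) = t^2 * qf Q y + qf Q z - t * cr Q y z"
proof -
  have "cinner (complex_of_real t *s y - z) (Q *v (complex_of_real t *s y - z)) =
     complex_of_real t * complex_of_real t * cinner y (Q *v y) + cinner z (Q *v z)
     - complex_of_real t * cinner y (Q *v z) - complex_of_real t * cinner z (Q *v y)"
    by (simp add: matrix_vector_diff_right matrix_vector_scale_right cinner_diff_left cinner_diff_right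
        cinner_scale_left cinner_scale_right algebra_simps)
  then have "qf Q (complex_of_real t *s y - z) = Re (complex_of_real t * complex_of_real t * cinner y (Q *v y) + cinner z (Q *v z)
     - complex_of_real t * cinner y (Q *v z) - complex_of_real t * cinner z (Q *v y))"
    unfolding qf_def by (rule arg_cong)
  then show ?thesis by (simp add: qf_def cr_def power2_eq_square algebra_simps)
qed

lemma cross_le: assumes "psd Q" "t > 0" shows "t * cr Q y z \<le> t^2 * qf Q y + qf Q z"
  using qf_nonneg[OF assms(1), of "complex_of_real t *s y - z"] qf_diff[of Q t y z] by simp

lemma cross_le_div: assumes "psd Q" "t > 0" shows "cr Q y z \<le> t * qf Q y + qf Q z / t"
proof -
  have "t * cr Q y z \<le> t * (t * qf Q y + qf Q z / t)"
    using cross_le[OF assms, of y z] assms(2) by (simp add: algebra_simps power2_eq_square)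
  then show ?thesis using assms(2) by simp
qed

lemma split_bound: assumes "psd Q" "t > 0"
  shows "qf Q (y + z) \<le> (1 + t) * qf Q y + (1 + 1 / t) * qf Q z"
  using cross_le_div[OF assms, of y z] qf_add[of Q y z] by (simp add: algebra_simps)

lemma cross_le_sqrt: assumes "psd Q" shows "cr Q y z \<le> 2 * sqrt (qf Q y) * sqrt (qf Q z)"
proof -
  let ?a = "qf Q y" and ?b = "qf Q z"
  have a0: "?a \<ge> 0" and b0: "?b \<ge> 0" using qf_nonneg[OF assms] by auto
  show ?thesis
  proof (cases "?a > 0 \<and> ?b > 0")
    case True
    define t where "t = sqrt ?b / sqrt ?a"
    have t: "t > 0" using True by (simp add: t_def)
    have "cr Q y z \<le> t * ?a + ?b / t" using cross_le_div[OF assms t] .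
    also have "t * ?a = sqrt ?a * sqrt ?b"
      using True by (simp add: t_def field_simps)
    also have "?b / t = sqrt ?a * sqrt ?b"
      using True by (simp add: t_def field_simps)
    finally show ?thesis by simp
  next
    case False
    then have z: "?a = 0 \<or> ?b = 0" using a0 b0 by linarith
    have "cr Q y z \<le> 0"
    proof (rule ccontr)
      assume pos: "\<not> cr Q y z \<le> 0"
      show False
      proof (cases "?a = 0")
        case True
        define t where "t = 2 * (?b + 1) / cr Q y z"
        have t: "t > 0" using pos b0 by (simp add: t_def)
        have "cr Q y z \<le> ?b / t" using cross_le_div[OF assms t, of y z] True by simp
        also have "\<dots> = ?b * cr Q y z / (2 * (?b + 1))" using pos by (simp add: t_def)
        also have "\<dots> < cr Q y z"
          using pos b0 apply (simp add: field_simps)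
          using mult_nonneg_nonneg[of "qf Q z" "cr Q y z"] by linarith
        finally show False by simp
      next
        case False
        then have bz: "?b = 0" using z by simp
        define t where "t = cr Q y z / (2 * (?a + 1))"
        have t: "t > 0" using pos a0 by (simp add: t_def)
        have "cr Q y z \<le> t * ?a" using cross_le_div[OF assms t, of y z] bz by simp
        also have "\<dots> = ?a * cr Q y z / (2 * (?a + 1))" using pos by (simp add: t_def)
        also have "\<dots> < cr Q y z"
          using pos a0 apply (simp add: field_simps)
          using mult_nonneg_nonneg[of "qf Q y" "cr Q y z"] by linarith
        finally show False by simp
      qed
    qed
    moreover have "0 \<le> 2 * sqrt ?a * sqrt ?b" using a0 b0 by simp
    ultimately show ?thesis by linarith
  qed
qed

lemma p_add: assumes "psd Q" shows "sqrt (qf Q (y + z)) \<le> sqrt (qf Q y) + sqrt (qf Q z)"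
proof -
  have a0: "qf Q y \<ge> 0" and b0: "qf Q z \<ge> 0" using qf_nonneg[OF assms] by auto
  have "qf Q (y + z) \<le> qf Q y + qf Q z + 2 * sqrt (qf Q y) * sqrt (qf Q z)"
    using qf_add[of Q y z] cross_le_sqrt[OF assms, of y z] by simp
  also have "\<dots> = (sqrt (qf Q y) + sqrt (qf Q z))^2"
    using a0 b0 by (simp add: power2_eq_square algebra_simps)
  finally have "sqrt (qf Q (y + z)) \<le> sqrt ((sqrt (qf Q y) + sqrt (qf Q z))^2)"
    by (rule real_sqrt_le_mono)
  then show ?thesis using a0 b0 by simp
qed

lemma qf_zero[simp]: "qf Q 0 = 0" by (simp add: qf_def)

lemma p_sum: assumes "psd Q" shows "sqrt (qf Q (sum y S)) \<le> (\<Sum>u\<in>S. sqrt (qf Q (y u)))"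
proof (induction S rule: infinite_finite_induct)
  case (insert x F)
  then show ?case using p_add[OF assms, of "y x" "sum y F"] by simp
qed auto

lemma quad_bound:
  assumes "psd Q"
  shows "qf Q (\<Sum>u\<in>S. c u *s u) \<le> (\<Sum>u\<in>S. (cmod (c u))^2) * (\<Sum>u\<in>S. qf Q u)"
proof -
  have qn: "0 \<le> qf Q (\<Sum>u\<in>S. c u *s u)" using qf_nonneg[OF assms] by blast
  have "sqrt (qf Q (\<Sum>u\<in>S. c u *s u)) \<le> (\<Sum>u\<in>S. cmod (c u) * sqrt (qf Q u))"
    using p_sum[OF assms, of "\<lambda>u. c u *s u" S] by (simp add: qf_scale real_sqrt_mult)
  moreover have "0 \<le> sqrt (qf Q (\<Sum>u\<in>S. c u *s u))" using qn by simp
  ultimately have "(sqrt (qf Q (\<Sum>u\<in>S. c u *s u)))^2 \<le> (\<Sum>u\<in>S. cmod (c u) * sqrt (qf Q u))^2"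
    by (rule power_mono)
  also have "\<dots> \<le> (\<Sum>u\<in>S. (cmod (c u))^2) * (\<Sum>u\<in>S. (sqrt (qf Q u))^2)"
    by (rule Cauchy_Schwarz_ineq_sum)
  also have "(\<Sum>u\<in>S. (sqrt (qf Q u))^2) = (\<Sum>u\<in>S. qf Q u)"
    using qf_nonneg[OF assms] by simp
  finally show ?thesis using qn by simp
qed

(* ---- part 6 ---- *)
lemma cmod_cinner_commute: "cmod (cinner a b) = cmod (cinner b a)"
  by (simp add: cinner_commute[of a b])

lemma cnj_mult_lemma: "cnj z * (z * complex_of_real l) = complex_of_real (l * (cmod z)^2)"
proof -
  have "cnj z * (z * complex_of_real l) = (cnj z * z) * complex_of_real l" by (simp only: mult.assoc)
  also have "\<dots> = complex_of_real ((cmod z)^2) * complex_of_real l" by (simp only: norm_sq_cmod)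
  finally show ?thesis by (simp add: mult.commute)
qed

lemma cinner1_norm: assumes "cinner v v = 1" shows "norm v = 1"
proof -
  have "complex_of_real ((norm v)^2) = complex_of_real 1" using assms by (simp add: cinner_self)
  then have "(norm v)^2 = 1" using of_real_eq_iff by blast
  then have "norm v = 1 \<or> norm v = -1" by (simp add: power2_eq_1_iff)
  then show ?thesis using norm_ge_zero[of v] by linarith
qed

lemma cinner_self_norm1: "norm v = 1 \<Longrightarrow> cinner v v = 1"
  by (simp add: cinner_self)

locale mix =
  fixes X :: "'x set" and psi :: "'x \<Rightarrow> complex^'n" and P :: "'x \<Rightarrow> real"
  assumes finX: "finite X" and norm1: "\<And>x. x \<in> X \<Longrightarrow> norm (psi x) = 1"
    and Pnn: "\<And>x. x \<in> X \<Longrightarrow> P x \<ge> 0" and Psum: "(\<Sum>x\<in>X. P x) = 1"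
begin

definition rho :: "complex^'n^'n" where
  "rho = (\<Sum>x\<in>X. P x *\<^sub>R outer (psi x) (psi x))"

lemma rho_mult: "rho *v y = (\<Sum>x\<in>X. complex_of_real (P x) *s (cinner (psi x) y *s psi x))"
  by (simp add: rho_def matrix_vector_sum_left matrix_vector_scaleR_left outer_mult)

lemma rho_cinner: "cinner z (rho *v y) = (\<Sum>x\<in>X. complex_of_real (P x) * (cinner (psi x) y * cinner z (psi x)))"
  by (simp add: rho_mult cinner_sum_right cinner_scale_right mult.assoc)

lemma rho_herm: "herm rho"
  unfolding herm_def rho_cinner
  by (simp add: cnj_sum cinner_commute[of "psi _" ] mult.commute)

lemma rho_quad: "cinner f (rho *v f) = complex_of_real (\<Sum>x\<in>X. P x * (cmod (cinner f (psi x)))^2)"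
proof -
  have "cinner f (rho *v f) = (\<Sum>x\<in>X. complex_of_real (P x) * (cnj (cinner f (psi x)) * cinner f (psi x)))"
    unfolding rho_cinner by (simp add: cinner_commute[of "psi _" f])
  also have "\<dots> = (\<Sum>x\<in>X. complex_of_real (P x * (cmod (cinner f (psi x)))^2))"
    by (simp add: norm_sq_cmod)
  finally show ?thesis by simp
qed

end

locale spec = mix +
  fixes B and lam :: "_ \<Rightarrow> real"
  assumes onB: "orthonormal B" and eig: "\<forall>u\<in>B. rho *v u = complex_of_real (lam u) *s u"
    and res: "\<forall>v. resid B v = 0"
begin

lemma finB: "finite B" using onB orthonormal_finite by blast

lemma expand: "v = (\<Sum>u\<in>B. cinner u v *s u)"
  using res[rule_format, of v] by (simp add: resid_def)

lemma lam_eq: "u \<in> B \<Longrightarrow> lam u = (\<Sum>x\<in>X. P x * (cmod (cinner u (psi x)))^2)"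
proof -
  assume u: "u \<in> B"
  have "cinner u (rho *v u) = complex_of_real (lam u)"
    using eig u orthonormalD[OF onB u u] by (simp add: cinner_scale_right)
  then have "complex_of_real (lam u) = complex_of_real (\<Sum>x\<in>X. P x * (cmod (cinner u (psi x)))^2)"
    using rho_quad[of u] by simp
  then show ?thesis using of_real_eq_iff by blast
qed

lemma lam_nonneg: "u \<in> B \<Longrightarrow> lam u \<ge> 0"
  using lam_eq Pnn by (simp add: sum_nonneg)

lemma parseval: "(\<Sum>u\<in>B. (cmod (cinner u v))^2) = (norm v)^2"
  using pythagoras[OF onB, of v] res by simp

lemma lam_sum: "(\<Sum>u\<in>B. lam u) = 1"
proof -
  have "(\<Sum>u\<in>B. lam u) = (\<Sum>u\<in>B. \<Sum>x\<in>X. P x * (cmod (cinner u (psi x)))^2)"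
    using lam_eq by simp
  also have "\<dots> = (\<Sum>x\<in>X. P x * (\<Sum>u\<in>B. (cmod (cinner u (psi x)))^2))"
    by (subst sum.swap) (simp add: sum_distrib_left)
  also have "\<dots> = (\<Sum>x\<in>X. P x)" using norm1 by (simp add: parseval)
  finally show ?thesis using Psum by simp
qed

lemma rho_expand: "Re (cinner f (rho *v f)) = (\<Sum>u\<in>B. lam u * (cmod (cinner u f))^2)"
proof -
  define cf where "cf u = cinner u f" for u
  have f_eq: "(\<Sum>u\<in>B. cf u *s u) = f" unfolding cf_def using expand[of f] by simp
  have "rho *v (\<Sum>u\<in>B. cf u *s u) = (\<Sum>u\<in>B. cf u *s (rho *v u))"
    by (simp only: matrix_vector_sum_right matrix_vector_scale_right)
  also have "\<dots> = (\<Sum>u\<in>B. (cf u * complex_of_real (lam u)) *s u)"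
    using eig by (intro sum.cong refl) simp
  finally have rf: "rho *v f = (\<Sum>u\<in>B. (cf u * complex_of_real (lam u)) *s u)"
    by (simp only: f_eq)
  have "cinner f (rho *v f) = cinner (\<Sum>u\<in>B. cf u *s u) (rho *v f)"
    by (simp only: f_eq)
  also have "\<dots> = cinner (\<Sum>u\<in>B. cf u *s u) (\<Sum>u\<in>B. (cf u * complex_of_real (lam u)) *s u)"
    by (simp only: rf)
  also have "\<dots> = (\<Sum>u\<in>B. cnj (cf u) * (cf u * complex_of_real (lam u)))"
    by (rule cinner_sum_orthonormal_sum[OF onB order_refl])
  also have "\<dots> = (\<Sum>u\<in>B. complex_of_real (lam u * (cmod (cf u))^2))"
    by (intro sum.cong refl) (rule cnj_mult_lemma)
  finally show ?thesis by (simp add: Re_sum cf_def)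
qed

definition Sc :: "real \<Rightarrow> _" where "Sc c = {u\<in>B. lam u \<ge> c}"
definition Tc :: "real \<Rightarrow> real" where "Tc c = (\<Sum>u\<in>Sc c. lam u)"

lemma Tc_trace: "Re (trace (rho ** proj_ge rho c)) = Tc c"
  unfolding Tc_def Sc_def by (rule trace_proj_ge[OF rho_herm onB eig res])

lemma Sc_sub: "Sc c \<subseteq> B" by (auto simp: Sc_def)

lemma Tc_bounds: "0 \<le> Tc c" "Tc c \<le> 1"
proof -
  show "0 \<le> Tc c" unfolding Tc_def using lam_nonneg Sc_sub by (intro sum_nonneg) auto
  have "Tc c \<le> (\<Sum>u\<in>B. lam u)" unfolding Tc_def
    using lam_nonneg Sc_sub finB by (intro sum_mono2) auto
  then show "Tc c \<le> 1" using lam_sum by simp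
qed

lemma card_Sc: "c * card (Sc c) \<le> Tc c"
proof -
  have "c * card (Sc c) = (\<Sum>u\<in>Sc c. c)" by simp
  also have "\<dots> \<le> Tc c" unfolding Tc_def by (intro sum_mono) (auto simp: Sc_def)
  finally show ?thesis .
qed

lemma Tc_alt: "Tc c = (\<Sum>x\<in>X. P x * (\<Sum>u\<in>Sc c. (cmod (cinner u (psi x)))^2))"
proof -
  have "Tc c = (\<Sum>u\<in>Sc c. \<Sum>x\<in>X. P x * (cmod (cinner u (psi x)))^2)"
    unfolding Tc_def using lam_eq Sc_sub by (intro sum.cong) auto
  also have "\<dots> = (\<Sum>x\<in>X. P x * (\<Sum>u\<in>Sc c. (cmod (cinner u (psi x)))^2))"
    by (subst sum.swap) (simp add: sum_distrib_left)
  finally show ?thesis .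
qed

lemma greedy_avg:
  assumes onF: "orthonormal F" and c: "c > 0"
  shows "(\<Sum>x\<in>X. P x * (\<Sum>f\<in>F. (cmod (cinner f (psi x)))^2)) \<le> Tc c + c * card F"
proof -
  have finF: "finite F" using onF orthonormal_finite by blast
  have "(\<Sum>x\<in>X. P x * (\<Sum>f\<in>F. (cmod (cinner f (psi x)))^2)) = (\<Sum>f\<in>F. \<Sum>x\<in>X. P x * (cmod (cinner f (psi x)))^2)"
    by (subst sum.swap) (simp add: sum_distrib_left)
  also have "\<dots> = (\<Sum>f\<in>F. Re (cinner f (rho *v f)))" by (simp add: rho_quad)
  also have "\<dots> = (\<Sum>f\<in>F. \<Sum>u\<in>B. lam u * (cmod (cinner u f))^2)" by (simp add: rho_expand)
  also have "\<dots> \<le> (\<Sum>f\<in>F. (\<Sum>u\<in>Sc c. lam u * (cmod (cinner u f))^2) + c)"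
  proof (rule sum_mono)
    fix f assume fF: "f \<in> F"
    have nf: "norm f = 1" using orthonormalD[OF onF fF fF] cinner1_norm by simp
    have split: "(\<Sum>u\<in>B. lam u * (cmod (cinner u f))^2) =
       (\<Sum>u\<in>Sc c. lam u * (cmod (cinner u f))^2) + (\<Sum>u\<in>B - Sc c. lam u * (cmod (cinner u f))^2)"
      using finB Sc_sub by (metis (no_types, lifting) add.commute sum.subset_diff)
    have "(\<Sum>u\<in>B - Sc c. lam u * (cmod (cinner u f))^2) \<le> (\<Sum>u\<in>B - Sc c. c * (cmod (cinner u f))^2)"
      by (intro sum_mono mult_right_mono) (auto simp: Sc_def)
    also have "\<dots> = c * (\<Sum>u\<in>B - Sc c. (cmod (cinner u f))^2)" by (simp add: sum_distrib_left)
    also have "\<dots> \<le> c * 1"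
    proof -
      have "(\<Sum>u\<in>B - Sc c. (cmod (cinner u f))^2) \<le> (norm f)^2"
        using bessel[OF orthonormal_subset[OF onB, of "B - Sc c"]] by blast
      then show ?thesis using c nf by simp
    qed
    finally show "(\<Sum>u\<in>B. lam u * (cmod (cinner u f))^2) \<le> (\<Sum>u\<in>Sc c. lam u * (cmod (cinner u f))^2) + c"
      using split by simp
  qed
  also have "\<dots> = (\<Sum>u\<in>Sc c. lam u * (\<Sum>f\<in>F. (cmod (cinner f u))^2)) + c * card F"
  proof -
    have "(\<Sum>f\<in>F. \<Sum>u\<in>Sc c. lam u * (cmod (cinner u f))^2) = (\<Sum>u\<in>Sc c. \<Sum>f\<in>F. lam u * (cmod (cinner u f))^2)"
      by (rule sum.swap)
    also have "\<dots> = (\<Sum>u\<in>Sc c. lam u * (\<Sum>f\<in>F. (cmod (cinner f u))^2))"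
      by (simp add: sum_distrib_left cmod_cinner_commute[of _ "u" for u])
    finally show ?thesis by (simp add: sum.distrib)
  qed
  also have "\<dots> \<le> (\<Sum>u\<in>Sc c. lam u * 1) + c * card F"
  proof -
    have "lam u * (\<Sum>f\<in>F. (cmod (cinner f u))^2) \<le> lam u * 1" if "u \<in> Sc c" for u
    proof -
      have uB: "u \<in> B" using that Sc_sub by blast
      have "norm u = 1" using orthonormalD[OF onB uB uB] cinner1_norm by simp
      then have "(\<Sum>f\<in>F. (cmod (cinner f u))^2) \<le> 1" using bessel[OF onF, of u] by simp
      then show ?thesis using lam_nonneg[OF uB] by (intro mult_left_mono) auto
    qed
    then show ?thesis by (simp add: sum_mono)
  qed
  finally show ?thesis by (simp add: Tc_def)
qed

end

(* ---- part 7 ---- *)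
lemma qf_sumQ: "qf (sum Q S) v = (\<Sum>j\<in>S. qf (Q j) v)"
  by (simp add: qf_def matrix_vector_sum_left cinner_sum_right Re_sum)

lemma qf_id: "qf (mat 1) v = (norm v)^2"
  by (simp add: qf_def cinner_self)

lemma psd_povm: "povm N Q \<Longrightarrow> j < N \<Longrightarrow> psd (Q j)"
  by (simp add: povm_def)

lemma qf_le_povm:
  assumes "povm N Q" "i < N" shows "qf (Q i) v \<le> (norm v)^2"
proof -
  have "qf (Q i) v \<le> (\<Sum>j<N. qf (Q j) v)"
    using assms qf_nonneg[OF psd_povm[OF assms(1)]] by (intro member_le_sum) auto
  also have "\<dots> = qf (\<Sum>j<N. Q j) v" by (simp add: qf_sumQ)
  also have "\<dots> = (norm v)^2" using assms(1) by (simp add: povm_def qf_id)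
  finally show ?thesis .
qed

lemma empirical_avg:
  fixes xs :: "nat \<Rightarrow> 'x" and g :: "'x \<Rightarrow> real"
  assumes "finite X" "\<forall>i<N. xs i \<in> X" "N > 0"
  shows "(\<Sum>x\<in>X. (real (card {i. i < N \<and> xs i = x}) / real N) * g x) = (\<Sum>i<N. g (xs i)) / real N"
proof -
  have "(\<Sum>i<N. g (xs i)) = (\<Sum>x\<in>X. \<Sum>i\<in>{i\<in>{..<N}. xs i = x}. g (xs i))"
    using assms by (intro sum.group[symmetric]) auto
  also have "\<dots> = (\<Sum>x\<in>X. real (card {i. i < N \<and> xs i = x}) * g x)"
  proof (intro sum.cong refl)
    fix x
    have "(\<Sum>i\<in>{i\<in>{..<N}. xs i = x}. g (xs i)) = (\<Sum>i\<in>{i\<in>{..<N}. xs i = x}. g x)" by simp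
    also have "\<dots> = real (card {i\<in>{..<N}. xs i = x}) * g x" by simp
    finally show "(\<Sum>i\<in>{i\<in>{..<N}. xs i = x}. g (xs i)) = real (card {i. i < N \<and> xs i = x}) * g x"
      by (simp add: lessThan_def)
  qed
  finally show ?thesis using assms(3) by (simp add: sum_divide_distrib)
qed

context spec
begin

lemma split_vec:
  "v = (\<Sum>u\<in>Sc c. cinner u v *s u) + (\<Sum>u\<in>B - Sc c. cinner u v *s u)"
proof -
  have "v = (\<Sum>u\<in>B. cinner u v *s u)" by (rule expand)
  also have "\<dots> = (\<Sum>u\<in>Sc c. cinner u v *s u) + (\<Sum>u\<in>B - Sc c. cinner u v *s u)"
    using sum.subset_diff[of "Sc c" B] Sc_sub finB by (simp add: add.commute)
  finally show ?thesis .
qed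

lemma norm_sq_sum_onb:
  assumes "F \<subseteq> B" shows "(norm (\<Sum>u\<in>F. cv u *s u))^2 = (\<Sum>u\<in>F. (cmod (cv u))^2)"
proof -
  have "cinner (\<Sum>u\<in>F. cv u *s u) (\<Sum>u\<in>F. cv u *s u) = (\<Sum>u\<in>F. cnj (cv u) * cv u)"
    by (rule cinner_sum_orthonormal_sum[OF onB assms])
  also have "\<dots> = complex_of_real (\<Sum>u\<in>F. (cmod (cv u))^2)" by (simp add: norm_sq_cmod)
  finally have "complex_of_real ((norm (\<Sum>u\<in>F. cv u *s u))^2) = complex_of_real (\<Sum>u\<in>F. (cmod (cv u))^2)"
    by (simp only: cinner_self)
  then show ?thesis using of_real_eq_iff by blast
qed

lemma converse_one:
  assumes povm: "povm N Q" and i: "i < N" and t: "t > 0" and nv: "norm v = 1"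
  shows "qf (Q i) v \<le> (1 + t) * (\<Sum>u\<in>Sc c. qf (Q i) u) + (1 + 1 / t) * (1 - (\<Sum>u\<in>Sc c. (cmod (cinner u v))^2))"
proof -
  let ?S = "Sc c"
  define a where "a = (\<Sum>u\<in>?S. cinner u v *s u)"
  define b where "b = (\<Sum>u\<in>B - ?S. cinner u v *s u)"
  have psdQ: "psd (Q i)" using psd_povm[OF povm i] .
  have v: "v = a + b" unfolding a_def b_def by (rule split_vec)
  have s1: "(\<Sum>u\<in>?S. (cmod (cinner u v))^2) \<le> 1"
    using bessel[OF orthonormal_subset[OF onB Sc_sub], of v] nv by simp
  have qa: "qf (Q i) a \<le> (\<Sum>u\<in>?S. qf (Q i) u)"
  proof -
    have "qf (Q i) a \<le> (\<Sum>u\<in>?S. (cmod (cinner u v))^2) * (\<Sum>u\<in>?S. qf (Q i) u)"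
      unfolding a_def by (rule quad_bound[OF psdQ])
    also have "\<dots> \<le> 1 * (\<Sum>u\<in>?S. qf (Q i) u)"
      using s1 qf_nonneg[OF psdQ] by (intro mult_right_mono sum_nonneg) auto
    finally show ?thesis by simp
  qed
  have qb: "qf (Q i) b \<le> 1 - (\<Sum>u\<in>?S. (cmod (cinner u v))^2)"
  proof -
    have "qf (Q i) b \<le> (norm b)^2" by (rule qf_le_povm[OF povm i])
    also have "\<dots> = (\<Sum>u\<in>B - ?S. (cmod (cinner u v))^2)"
      unfolding b_def by (rule norm_sq_sum_onb) auto
    also have "\<dots> = (\<Sum>u\<in>B. (cmod (cinner u v))^2) - (\<Sum>u\<in>?S. (cmod (cinner u v))^2)"
      using finB Sc_sub by (rule sum_diff)
    also have "\<dots> = 1 - (\<Sum>u\<in>?S. (cmod (cinner u v))^2)" using parseval[of v] nv by simp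
    finally show ?thesis .
  qed
  have "qf (Q i) v \<le> (1 + t) * qf (Q i) a + (1 + 1 / t) * qf (Q i) b"
    unfolding v by (rule split_bound[OF psdQ t])
  also have "\<dots> \<le> (1 + t) * (\<Sum>u\<in>?S. qf (Q i) u) + (1 + 1 / t) * (1 - (\<Sum>u\<in>?S. (cmod (cinner u v))^2))"
    using qa qb t by (intro add_mono mult_left_mono) auto
  finally show ?thesis .
qed

lemma converse_core:
  fixes t :: real
  assumes povm: "povm N Q" and N: "N > 0" and xs: "\<forall>i<N. xs i \<in> X" and t: "t > 0"
    and Pemp: "\<forall>x\<in>X. P x = real (card {i. i < N \<and> xs i = x}) / real N"
  shows "(\<Sum>i<N. qf (Q i) (psi (xs i))) \<le> (1 + t) * real (card (Sc c)) + (1 + 1 / t) * (real N - real N * Tc c)"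
proof -
  let ?S = "Sc c"
  let ?s = "\<lambda>x. (\<Sum>u\<in>?S. (cmod (cinner u (psi x)))^2)"
  have "(\<Sum>i<N. qf (Q i) (psi (xs i))) \<le> (\<Sum>i<N. (1 + t) * (\<Sum>u\<in>?S. qf (Q i) u) + (1 + 1 / t) * (1 - ?s (xs i)))"
    using converse_one[where N=N and Q=Q and t=t and c=c] povm t norm1 xs by (intro sum_mono) auto
  also have "\<dots> = (1 + t) * (\<Sum>u\<in>?S. \<Sum>i<N. qf (Q i) u) + (1 + 1 / t) * (real N - (\<Sum>i<N. ?s (xs i)))"
  proof -
    have e1: "(\<Sum>i<N. (1 + t) * (\<Sum>u\<in>?S. qf (Q i) u)) = (1 + t) * (\<Sum>u\<in>?S. \<Sum>i<N. qf (Q i) u)"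
      by (simp add: sum_distrib_left sum.swap[of _ "{..<N}"])
    have e2: "(\<Sum>i<N. (1 + 1 / t) * (1 - ?s (xs i))) = (1 + 1 / t) * (real N - (\<Sum>i<N. ?s (xs i)))"
      by (simp add: sum_distrib_left[symmetric] sum_subtractf)
    show ?thesis by (simp only: sum.distrib e1 e2)
  qed
  also have "(\<Sum>u\<in>?S. \<Sum>i<N. qf (Q i) u) = card ?S"
  proof -
    have "(\<Sum>u\<in>?S. \<Sum>i<N. qf (Q i) u) = (\<Sum>u\<in>?S. qf (mat 1) u)"
      using povm by (simp add: qf_sumQ[symmetric] povm_def)
    also have "\<dots> = (\<Sum>u\<in>?S. 1)"
    proof (intro sum.cong refl)
      fix u assume "u \<in> ?S"
      then have "u \<in> B" using Sc_sub by blast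
      then have "cinner u u = 1" using orthonormalD[OF onB] by simp
      then have "norm u = 1" by (rule cinner1_norm)
      then show "qf (mat 1) u = 1" by (simp add: qf_id)
    qed
    finally show ?thesis by simp
  qed
  also have "(\<Sum>i<N. ?s (xs i)) = real N * Tc c"
  proof -
    have "Tc c = (\<Sum>x\<in>X. (real (card {i. i < N \<and> xs i = x}) / real N) * ?s x)"
      using Pemp by (simp add: Tc_alt)
    also have "\<dots> = (\<Sum>i<N. ?s (xs i)) / real N" by (rule empirical_avg[OF finX xs N])
    finally show ?thesis using N by simp
  qed
  finally show ?thesis .
qed

end

(* ---- part 8 ---- *)
lemma sum_div_index:
  fixes g :: "nat \<Rightarrow> 'a::comm_monoid_add"
  shows "(\<Sum>i<K * m. g (i div m)) = (\<Sum>j<K. \<Sum>l<m. g j)"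
proof (induction K)
  case 0 then show ?case by simp
next
  case (Suc K)
  have "{..<Suc K * m} = {..<K * m} \<union> {K * m..<K * m + m}" by auto
  moreover have "(\<Sum>i\<in>{..<K * m} \<union> {K * m..<K * m + m}. g (i div m)) = (\<Sum>i<K * m. g (i div m)) + (\<Sum>i\<in>{K * m..<K * m + m}. g (i div m))"
    by (rule sum.union_disjoint) auto
  ultimately have "(\<Sum>i<Suc K * m. g (i div m)) = (\<Sum>i<K * m. g (i div m)) + (\<Sum>i\<in>{K * m..<K * m + m}. g (i div m))"
    by simp
  also have "(\<Sum>i\<in>{K * m..<K * m + m}. g (i div m)) = (\<Sum>l<m. g K)"
  proof -
    have "(\<Sum>i\<in>{K * m..<K * m + m}. g (i div m)) = (\<Sum>l<m. g ((K * m + l) div m))"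
      by (rule sum.reindex_bij_witness[where j="\<lambda>i. i - K * m" and i="\<lambda>l. K * m + l"]) auto
    also have "\<dots> = (\<Sum>l<m. g K)" by (intro sum.cong refl) auto
    finally show ?thesis .
  qed
  finally show ?case using Suc by simp
qed

lemma qf_outer: "qf (outer f f) v = (cmod (cinner f v))^2"
proof -
  have "cinner v (outer f f *v v) = cnj (cinner f v) * cinner f v"
    by (simp add: outer_mult cinner_scale_right cinner_commute[of v f] mult.commute)
  then show ?thesis by (simp add: qf_def norm_sq_cmod)
qed

lemma cinner_outer_real: "cinner v (outer f f *v v) = complex_of_real ((cmod (cinner f v))^2)"
proof -
  have "cinner v (outer f f *v v) = cnj (cinner f v) * cinner f v"
    by (simp add: outer_mult cinner_scale_right cinner_commute[of v f] mult.commute)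
  also have "\<dots> = complex_of_real ((cmod (cinner f v))^2)" by (rule norm_sq_cmod)
  finally show ?thesis .
qed

context spec
begin

lemma exists_small:
  assumes "\<And>x. x \<in> X \<Longrightarrow> g x > T"
  shows "(\<Sum>x\<in>X. P x * g x) > T"
proof -
  have ne: "X \<noteq> {}" using Psum by auto
  obtain x0 where x0: "x0 \<in> X" "P x0 > 0"
  proof (rule ccontr)
    assume "\<not> thesis"
    then have "\<forall>x\<in>X. P x = 0" using Pnn that by force
    then show False using Psum by simp
  qed
  have "(\<Sum>x\<in>X. P x * g x) - T = (\<Sum>x\<in>X. P x * (g x - T))"
    using Psum by (simp add: right_diff_distrib sum_subtractf sum_distrib_right[symmetric])
  also have "\<dots> > 0"
  proof -
    have "(\<Sum>x\<in>X. P x * (g x - T)) \<ge> P x0 * (g x0 - T)"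
    proof (rule member_le_sum)
      fix x assume "x \<in> X - {x0}"
      then show "0 \<le> P x * (g x - T)" using Pnn assms by (simp add: less_imp_le)
    qed (use x0 finX in auto)
    moreover have "P x0 * (g x0 - T) > 0" using x0 assms by simp
    ultimately show ?thesis by linarith
  qed
  finally show ?thesis by simp
qed

lemma greedy:
  assumes c: "c > 0" and K: "Tc c + real (K - 1) * c < 1"
  shows "k \<le> K \<Longrightarrow> \<exists>f y. orthonormal (f ` {..<k}) \<and> inj_on f {..<k} \<and>
     (\<forall>j<k. y j \<in> X \<and> (cmod (cinner (f j) (psi (y j))))^2 \<ge> 1 - Tc c - real j * c)"
proof (induction k)
  case 0 then show ?case by (auto simp: orthonormal_def)
next
  case (Suc k)
  then obtain f y where on: "orthonormal (f ` {..<k})" and inj: "inj_on f {..<k}"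
    and good: "\<forall>j<k. y j \<in> X \<and> (cmod (cinner (f j) (psi (y j))))^2 \<ge> 1 - Tc c - real j * c" by auto
  let ?F = "f ` {..<k}"
  have cardF: "card ?F = k" using inj by (simp add: card_image)
  obtain x where x: "x \<in> X" "(\<Sum>g\<in>?F. (cmod (cinner g (psi x)))^2) \<le> Tc c + c * k"
  proof (rule ccontr)
    assume "\<not> thesis"
    then have "\<And>x. x \<in> X \<Longrightarrow> (\<Sum>g\<in>?F. (cmod (cinner g (psi x)))^2) > Tc c + c * k"
      using that by force
    then have "(\<Sum>x\<in>X. P x * (\<Sum>g\<in>?F. (cmod (cinner g (psi x)))^2)) > Tc c + c * k"
      by (rule exists_small)
    then show False using greedy_avg[OF on c] cardF by simp
  qed
  define r where "r = resid ?F (psi x)"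
  have kK: "real k \<le> real (K - 1)" using Suc.prems by simp
  have "c * real k \<le> c * real (K - 1)" using kK c by (simp add: mult_left_mono)
  then have "Tc c + c * k < 1" using K by (simp add: mult.commute)
  have nr: "(norm r)^2 = 1 - (\<Sum>g\<in>?F. (cmod (cinner g (psi x)))^2)"
    using pythagoras[OF on, of "psi x"] norm1[OF x(1)] by (simp add: r_def)
  have nrge: "(norm r)^2 \<ge> 1 - Tc c - real k * c" using nr x(2) by (simp add: mult.commute)
  have rpos: "norm r > 0"
  proof -
    have "(norm r)^2 > 0" using nrge \<open>Tc c + c * k < 1\<close> by (simp only: mult.commute)
    then have "norm r \<noteq> 0" by auto
    then show ?thesis using norm_ge_zero[of r] by linarith
  qed
  define fk where "fk = complex_of_real (1 / norm r) *s r"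
  have perp: "cinner g r = 0" if "g \<in> ?F" for g using cinner_resid[OF on that] by (simp add: r_def)
  have fk_perp: "cinner g fk = 0" if "g \<in> ?F" for g
    using perp[OF that] by (simp add: fk_def cinner_scale_right)
  have fk_norm: "cinner fk fk = 1"
  proof -
    have "cinner fk fk = complex_of_real (1 / norm r) * (cnj (complex_of_real (1 / norm r)) * cinner r r)"
      by (simp only: fk_def cinner_scale_left cinner_scale_right)
    also have "\<dots> = 1" using rpos by (simp add: cinner_self power2_eq_square)
    finally show ?thesis .
  qed
  have fk_notin: "fk \<notin> ?F" using fk_perp fk_norm by force
  have "cinner r (psi x) = cinner r r"
  proof -
    define p where "p = (\<Sum>g\<in>?F. cinner g (psi x) *s g)"
    have eq: "psi x = r + p" by (simp add: r_def resid_def p_def)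
    have "cinner r (psi x) = cinner r r + cinner r p" by (subst eq) (rule cinner_add_right)
    also have "cinner r p = (\<Sum>g\<in>?F. cinner g (psi x) * cinner r g)"
      by (simp only: p_def cinner_sum_right cinner_scale_right)
    finally have "cinner r (psi x) = cinner r r + (\<Sum>g\<in>?F. cinner g (psi x) * cinner r g)" .
    also have "(\<Sum>g\<in>?F. cinner g (psi x) * cinner r g) = 0"
      using perp by (intro sum.neutral) (auto simp: cinner_commute[of r])
    finally show ?thesis by simp
  qed
  then have "cinner fk (psi x) = complex_of_real (norm r)"
    using rpos by (simp add: fk_def cinner_scale_left cinner_self power2_eq_square)
  then have fk_good: "(cmod (cinner fk (psi x)))^2 \<ge> 1 - Tc c - real k * c" using nrge by simp
  define f' where "f' = f(k := fk)"
  define y' where "y' = y(k := x)"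
  have img: "f' ` {..<Suc k} = insert fk ?F"
  proof -
    have "f' ` {..<Suc k} = insert (f' k) (f' ` {..<k})" by (simp add: lessThan_Suc)
    moreover have "f' k = fk" by (simp add: f'_def)
    moreover have "f' ` {..<k} = ?F" by (rule image_cong) (auto simp: f'_def)
    ultimately show ?thesis by simp
  qed
  have on': "orthonormal (f' ` {..<Suc k})"
    unfolding img orthonormal_def
  proof (intro ballI)
    fix a b assume a: "a \<in> insert fk ?F" and b: "b \<in> insert fk ?F"
    show "cinner a b = (if a = b then 1 else 0)"
    proof (cases "a = fk")
      case True
      show ?thesis
      proof (cases "b = fk")
        case True then show ?thesis using \<open>a = fk\<close> fk_norm by simp
      next
        case False
        then have "b \<in> ?F" using b by simp
        then have "cinner fk b = 0" using fk_perp[of b] cinner_commute[of fk b] by simp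
        then show ?thesis using \<open>a = fk\<close> False by simp
      qed
    next
      case False
      then have aF: "a \<in> ?F" using a by simp
      show ?thesis
      proof (cases "b = fk")
        case True then show ?thesis using fk_perp[OF aF] False by simp
      next
        case False
        then have "b \<in> ?F" using b by simp
        then show ?thesis using orthonormalD[OF on aF] by simp
      qed
    qed
  qed
  have inj': "inj_on f' {..<Suc k}"
  proof -
    have "inj_on f' {..<k}" using inj by (auto simp: f'_def inj_on_def)
    moreover have "f' k \<notin> f' ` {..<k}" using fk_notin by (auto simp: f'_def)
    ultimately show ?thesis by (simp add: lessThan_Suc)
  qed
  have good': "\<forall>j<Suc k. y' j \<in> X \<and> (cmod (cinner (f' j) (psi (y' j))))^2 \<ge> 1 - Tc c - real j * c"
    using good x(1) fk_good by (auto simp: f'_def y'_def less_Suc_eq)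
  show ?case using on' inj' good' by blast
qed

end

(* ---- part 9 ---- *)
lemma cinner_projS: "cinner v (projS F *v v) = complex_of_real (\<Sum>g\<in>F. (cmod (cinner g v))^2)"
proof -
  have "cinner v (projS F *v v) = (\<Sum>g\<in>F. cnj (cinner g v) * cinner g v)"
    by (simp add: projS_mult cinner_sum_right cinner_scale_right cinner_commute[of v] mult.commute)
  also have "\<dots> = complex_of_real (\<Sum>g\<in>F. (cmod (cinner g v))^2)" by (simp add: norm_sq_cmod)
  finally show ?thesis .
qed

lemma Qform:
  "cinner v ((a *\<^sub>R (outer f f + b *\<^sub>R (mat 1 - projS F))) *v v) =
   complex_of_real (a * ((cmod (cinner f v))^2 + b * ((norm v)^2 - (\<Sum>g\<in>F. (cmod (cinner g v))^2))))"
proof -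
  have "(a *\<^sub>R (outer f f + b *\<^sub>R (mat 1 - projS F))) *v v =
     complex_of_real a *s (outer f f *v v + complex_of_real b *s (v - projS F *v v))"
    by (simp add: matrix_vector_scaleR_left matrix_vector_add_left matrix_vector_diff_left)
  then have "cinner v ((a *\<^sub>R (outer f f + b *\<^sub>R (mat 1 - projS F))) *v v) =
     complex_of_real a * (cinner v (outer f f *v v) + complex_of_real b * (cinner v v - cinner v (projS F *v v)))"
    by (simp add: cinner_scale_right cinner_add_right cinner_diff_right distrib_left right_diff_distrib mult.assoc)
  also have "\<dots> = complex_of_real (a * ((cmod (cinner f v))^2 + b * ((norm v)^2 - (\<Sum>g\<in>F. (cmod (cinner g v))^2))))"
    by (simp only: cinner_outer_real cinner_projS cinner_self of_real_mult of_real_add of_real_diff)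
  finally show ?thesis .
qed

context spec
begin

lemma achieve:
  assumes c: "c > 0" and K: "K \<ge> 1" and m: "m \<ge> 1" and KT: "Tc c + real (K - 1) * c < 1"
  shows "\<exists>xs Q. povm (K * m) Q \<and> (\<forall>i<K * m. xs i \<in> X) \<and>
     (\<forall>i<K * m. qf (Q i) (psi (xs i)) \<ge> (1 - Tc c - real (K - 1) * c) / real m)"
proof -
  obtain f y where on: "orthonormal (f ` {..<K})" and inj: "inj_on f {..<K}"
    and good: "\<forall>j<K. y j \<in> X \<and> (cmod (cinner (f j) (psi (y j))))^2 \<ge> 1 - Tc c - real j * c"
    using greedy[OF c KT, of K] by auto
  define F where "F = f ` {..<K}"
  define R where "R = mat 1 - projS F"
  define Q where "Q i = (1 / real m) *\<^sub>R (outer (f (i div m)) (f (i div m)) + (1 / real K) *\<^sub>R R)" for i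
  define xs where "xs i = y (i div m)" for i
  have Qf: "cinner v (Q i *v v) = complex_of_real ((1 / real m) * ((cmod (cinner (f (i div m)) v))^2
      + (1 / real K) * ((norm v)^2 - (\<Sum>g\<in>F. (cmod (cinner g v))^2))))" for i v
    unfolding Q_def R_def by (rule Qform)
  have bes: "(\<Sum>g\<in>F. (cmod (cinner g v))^2) \<le> (norm v)^2" for v
    using bessel[OF on] by (simp add: F_def)
  have psdQ: "psd (Q i)" for i
    unfolding psd_def
  proof
    fix v
    show "\<exists>r\<ge>0. cinner v (Q i *v v) = complex_of_real r"
      using bes[of v] m K by (intro exI[of _ "(1 / real m) * ((cmod (cinner (f (i div m)) v))^2
      + (1 / real K) * ((norm v)^2 - (\<Sum>g\<in>F. (cmod (cinner g v))^2)))"]) (auto simp: Qf)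
  qed
  have constsum: "(\<Sum>l<n. (1 / real n) *\<^sub>R M) = M" if "n \<ge> 1" for n and M :: "complex^'n^'n"
  proof -
    have "(\<Sum>l<n. (1 / real n) *\<^sub>R M) = (real n * (1 / real n)) *\<^sub>R M"
      by (simp only: sum_constant_scaleR card_lessThan scaleR_scaleR)
    then show ?thesis using that by simp
  qed
  have sumQ: "(\<Sum>i<K * m. Q i) = mat 1"
  proof -
    have "(\<Sum>i<K * m. Q i) = (\<Sum>j<K. \<Sum>l<m. (1 / real m) *\<^sub>R (outer (f j) (f j) + (1 / real K) *\<^sub>R R))"
      unfolding Q_def by (rule sum_div_index)
    also have "\<dots> = (\<Sum>j<K. outer (f j) (f j) + (1 / real K) *\<^sub>R R)"
      by (simp only: constsum[OF m])
    also have "\<dots> = (\<Sum>j<K. outer (f j) (f j)) + R"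
      by (simp only: sum.distrib constsum[OF K])
    also have "(\<Sum>j<K. outer (f j) (f j)) = projS F"
      unfolding projS_def F_def using sum.reindex[OF inj, of "\<lambda>u. outer u u"] by simp
    finally show ?thesis by (simp add: R_def)
  qed
  have povm: "povm (K * m) Q" using psdQ sumQ by (simp add: povm_def)
  have xsX: "\<forall>i<K * m. xs i \<in> X"
  proof (intro allI impI)
    fix i assume "i < K * m"
    then have "i div m < K" using m by (simp add: div_less_iff_less_mult)
    then show "xs i \<in> X" using good by (simp add: xs_def)
  qed
  have qual: "\<forall>i<K * m. qf (Q i) (psi (xs i)) \<ge> (1 - Tc c - real (K - 1) * c) / real m"
  proof (intro allI impI)
    fix i assume "i < K * m"
    then have jK: "i div m < K" using m by (simp add: div_less_iff_less_mult)
    let ?j = "i div m" let ?v = "psi (xs i)"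
    define s2 where "s2 = (cmod (cinner (f ?j) ?v))^2"
    define L where "L = 1 - Tc c - real (K - 1) * c"
    have "qf (Q i) ?v = (1 / real m) * (s2
      + (1 / real K) * ((norm ?v)^2 - (\<Sum>g\<in>F. (cmod (cinner g ?v))^2)))"
      by (simp add: qf_def Qf s2_def)
    also have "\<dots> \<ge> (1 / real m) * s2"
      using bes[of ?v] m K by (intro mult_left_mono) auto
    finally have q1: "qf (Q i) ?v \<ge> (1 / real m) * s2" .
    have "s2 \<ge> L"
    proof -
      have "real ?j \<le> real (K - 1)" using jK by simp
      then have "real ?j * c \<le> real (K - 1) * c" using c by (simp add: mult_right_mono)
      moreover have "s2 \<ge> 1 - Tc c - real ?j * c" using good jK by (simp add: xs_def s2_def)
      ultimately show ?thesis by (simp add: L_def)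
    qed
    then have "(1 / real m) * L \<le> (1 / real m) * s2" using m by (intro mult_left_mono) auto
    then show "qf (Q i) ?v \<ge> L / real m" using q1 by simp
  qed
  show ?thesis using povm xsX qual by blast
qed

end

(* ---- part 10 ---- *)
lemma ereal_minus_le_aux: "a \<le> ereal (s + r) \<Longrightarrow> a - ereal r \<le> ereal s"
  by (cases a) auto

lemma ereal_le_plus_aux: "ereal (s - r) \<le> a \<Longrightarrow> ereal s \<le> a + ereal r"
  by (cases a) auto

lemma error_eq:
  assumes "norm a = 1"
  shows "Re (trace (outer a a ** (mat 1 - Qm))) = 1 - qf Qm a"
proof -
  have "trace (outer a a ** (mat 1 - Qm)) = cinner a ((mat 1 - Qm) *v a)" by (rule trace_outer_mult)
  also have "\<dots> = cinner a a - cinner a (Qm *v a)" by (simp add: matrix_vector_diff_left cinner_diff_right)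
  finally show ?thesis using assms by (simp add: cinner_self qf_def)
qed

lemma psd_id: "psd (mat 1)"
  unfolding psd_def
proof
  fix v :: "complex^'n"
  show "\<exists>r\<ge>0. cinner v (mat 1 *v v) = complex_of_real r"
    by (intro exI[of _ "(norm v)^2"]) (simp add: cinner_self)
qed

lemma herm_id: "herm (mat 1)"
  unfolding herm_def
proof (intro allI)
  fix x y :: "complex^'n"
  show "cinner x (mat 1 *v y) = cnj (cinner y (mat 1 *v x))"
    by (simp only: matrix_vector_mul_lid) (rule cinner_commute)
qed

lemma success_bound:
  fixes Q :: "nat \<Rightarrow> complex^'n^'n"
  assumes povm: "povm N Q" and nv: "\<forall>i<N. norm (v i) = 1"
  shows "(\<Sum>i<N. qf (Q i) (v i)) \<le> real CARD('n)"
proof -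
  obtain B0 :: "(complex^'n) set" and l0 where on: "orthonormal B0" and res: "\<forall>v. resid B0 v = 0"
    using spectral[OF herm_id] by blast
  have finB0: "finite B0" using on orthonormal_finite by blast
  have "qf (Q i) (v i) \<le> (\<Sum>u\<in>B0. qf (Q i) u)" if i: "i < N" for i
  proof -
    have psdQ: "psd (Q i)" using psd_povm[OF povm i] .
    have e: "v i = (\<Sum>u\<in>B0. cinner u (v i) *s u)" using res[rule_format, of "v i"] by (simp add: resid_def)
    have par: "(\<Sum>u\<in>B0. (cmod (cinner u (v i)))^2) = 1"
      using pythagoras[OF on, of "v i"] res nv i by simp
    have "qf (Q i) (v i) = qf (Q i) (\<Sum>u\<in>B0. cinner u (v i) *s u)" using e by simp
    also have "\<dots> \<le> (\<Sum>u\<in>B0. (cmod (cinner u (v i)))^2) * (\<Sum>u\<in>B0. qf (Q i) u)"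
      by (rule quad_bound[OF psdQ])
    finally show ?thesis using par by simp
  qed
  then have "(\<Sum>i<N. qf (Q i) (v i)) \<le> (\<Sum>i<N. \<Sum>u\<in>B0. qf (Q i) u)" by (intro sum_mono) auto
  also have "\<dots> = (\<Sum>u\<in>B0. qf (\<Sum>i<N. Q i) u)" by (subst sum.swap) (simp add: qf_sumQ)
  also have "\<dots> = (\<Sum>u\<in>B0. 1)"
  proof (intro sum.cong refl)
    fix u assume "u \<in> B0"
    then have "cinner u u = 1" using orthonormalD[OF on] by simp
    then have "norm u = 1" by (rule cinner1_norm)
    then show "qf (\<Sum>i<N. Q i) u = 1" using povm by (simp add: povm_def qf_id)
  qed
  also have "\<dots> = real (card B0)" by simp
  also have "\<dots> \<le> real CARD('n)" using orthonormal_card[OF on] by simp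
  finally show ?thesis .
qed

locale pure_fam =
  fixes W :: "'x \<Rightarrow> complex^'n^'n" and X :: "'x set" and psi :: "'x \<Rightarrow> complex^'n"
  assumes finX: "finite X" and neX: "X \<noteq> {}"
    and psi: "\<And>x. x \<in> X \<Longrightarrow> norm (psi x) = 1 \<and> W x = outer (psi x) (psi x)"
begin

lemma err: assumes "x \<in> X" shows "Re (trace (W x ** (mat 1 - Qm))) = 1 - qf Qm (psi x)"
proof -
  have "W x = outer (psi x) (psi x)" "norm (psi x) = 1" using psi[OF assms] by auto
  then show ?thesis using error_eq[of "psi x" Qm] by simp
qed

lemma dist_success:
  assumes "distinguishable W X eps N" "N > 0"
  shows "\<exists>xs Q. (\<forall>i<N. xs i \<in> X) \<and> povm N Q \<and> real N * (1 - eps) \<le> (\<Sum>i<N. qf (Q i) (psi (xs i)))"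
proof -
  obtain xs Q where xs: "\<forall>i<N. xs i \<in> X" and povm: "povm N Q"
    and e: "(1 / real N) * (\<Sum>i<N. Re (trace (W (xs i) ** (mat 1 - Q i)))) \<le> eps"
    using assms(1) unfolding distinguishable_def by blast
  have "(\<Sum>i<N. Re (trace (W (xs i) ** (mat 1 - Q i)))) = (\<Sum>i<N. 1 - qf (Q i) (psi (xs i)))"
    using xs err by (intro sum.cong refl) auto
  also have "\<dots> = real N - (\<Sum>i<N. qf (Q i) (psi (xs i)))" by (simp add: sum_subtractf)
  finally have "(1 / real N) * (real N - (\<Sum>i<N. qf (Q i) (psi (xs i)))) \<le> eps" using e by simp
  then have "real N - (\<Sum>i<N. qf (Q i) (psi (xs i))) \<le> eps * real N"
    using assms(2) by (simp add: field_simps)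
  then show ?thesis using xs povm by (intro exI[of _ xs] exI[of _ Q]) (simp add: algebra_simps)
qed

lemma dist_bound:
  assumes "distinguishable W X eps N"
  shows "real N * (1 - eps) \<le> real CARD('n)"
proof (cases "N = 0")
  case True then show ?thesis by simp
next
  case False
  then obtain xs Q where "\<forall>i<N. xs i \<in> X" "povm N Q" "real N * (1 - eps) \<le> (\<Sum>i<N. qf (Q i) (psi (xs i)))"
    using dist_success[OF assms] by auto
  moreover have "(\<Sum>i<N. qf (Q i) (psi (xs i))) \<le> real CARD('n)"
  proof (rule success_bound)
    show "povm N Q" by fact
    show "\<forall>i<N. norm (psi (xs i)) = 1" using calculation(1) psi by blast
  qed
  ultimately show ?thesis by linarith
qed

lemma dist_one: assumes "eps \<ge> 0" shows "distinguishable W X eps 1"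
proof -
  obtain x where x: "x \<in> X" using neX by blast
  show ?thesis unfolding distinguishable_def
    using x assms psd_id by (intro exI[of _ "\<lambda>i. x"] exI[of _ "\<lambda>i. mat 1"]) (simp add: povm_def)
qed

lemma Mdist_props:
  assumes "0 \<le> eps" "eps < 1"
  shows "distinguishable W X eps (Mdist W X eps)"
    and "\<And>N. distinguishable W X eps N \<Longrightarrow> N \<le> Mdist W X eps"
    and "Mdist W X eps \<ge> 1"
proof -
  define b where "b = nat (ceiling (real CARD('n) / (1 - eps)))"
  have bnd: "N \<le> b" if "distinguishable W X eps N" for N
  proof -
    have "real N * (1 - eps) \<le> real CARD('n)" using dist_bound[OF that] .
    then have "real N \<le> real CARD('n) / (1 - eps)" using assms by (simp add: field_simps)
    then have "real N \<le> ceiling (real CARD('n) / (1 - eps))" by linarith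
    then show ?thesis unfolding b_def by linarith
  qed
  show "distinguishable W X eps (Mdist W X eps)"
    unfolding Mdist_def using dist_one[OF assms(1)] bnd by (rule GreatestI_nat)
  show "N \<le> Mdist W X eps" if "distinguishable W X eps N" for N
    unfolding Mdist_def using that bnd by (rule Greatest_le_nat)
  show "Mdist W X eps \<ge> 1"
    unfolding Mdist_def using dist_one[OF assms(1)] bnd by (rule Greatest_le_nat)
qed

end

(* ---- part 11 ---- *)
lemma arith_up:
  fixes N S T eps d1 d2 :: real
  assumes N: "N > 0" and d1: "d1 > 0" and d2: "d2 > 0" "d2 < 1" and eps: "eps \<ge> 0"
    and H1: "N * (1 - eps) \<le> (1 + 1 / d2) * S + (1 + 1 / (1 / d2)) * (N - N * T)"
    and H2: "S \<le> N * d1 * d2^2"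
  shows "T \<le> eps + d1 + 2 * d2"
proof -
  have "(1 + 1 / d2) * S \<le> (1 + 1 / d2) * (N * d1 * d2^2)"
    using H2 d2 by (intro mult_left_mono) auto
  also have "\<dots> = N * (d1 * d2^2 + d1 * d2)" using d2 by (simp add: field_simps power2_eq_square)
  finally have "N * (1 - eps) \<le> N * (d1 * d2^2 + d1 * d2) + (1 + d2) * (N - N * T)" using H1 by simp
  also have "\<dots> = N * (d1 * d2^2 + d1 * d2 + (1 + d2) * (1 - T))" by (simp add: algebra_simps)
  finally have "1 - eps \<le> d1 * d2^2 + d1 * d2 + (1 + d2) * (1 - T)" using N by simp
  then have A: "(1 + d2) * T \<le> d1 * d2 * (1 + d2) + d2 + eps" by (simp add: algebra_simps power2_eq_square)
  have a: "d1 * d2 * (1 + d2) \<le> d1 * (1 + d2)" using d1 d2 by (simp add: mult_right_mono)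
  have "0 \<le> (d2 + eps) * d2" using d2 eps by simp
  then have b: "d2 + eps \<le> (d2 + eps) * (1 + d2)" by (simp add: algebra_simps)
  have "(1 + d2) * T \<le> d1 * (1 + d2) + (d2 + eps) * (1 + d2)" using A a b by linarith
  then have "(1 + d2) * T \<le> (1 + d2) * (d1 + d2 + eps)" by (simp add: algebra_simps)
  then have "T \<le> d1 + d2 + eps" using d2 by simp
  then show ?thesis using d2 by simp
qed

lemma spec_exists:
  assumes pf: "pure_fam W X psi" and P: "P \<in> distributions X"
  shows "\<exists>B lam. spec X psi P B lam \<and> mixture W X P = mix.rho X psi P"
proof -
  have m: "mix X psi P" unfolding mix_def using pf P by (auto simp: distributions_def pure_fam_def)
  obtain B lam where on: "orthonormal B" and eig: "\<forall>u\<in>B. mix.rho X psi P *v u = complex_of_real (lam u) *s u"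
    and res: "\<forall>v. resid B v = 0"
    using spectral[OF mix.rho_herm[OF m]] by blast
  have sp: "spec X psi P B lam" unfolding spec_def spec_axioms_def using m on eig res by auto
  have "mixture W X P = mix.rho X psi P"
    unfolding mixture_def mix.rho_def[OF m] using pf by (intro sum.cong) (auto simp: pure_fam_def)
  then show ?thesis using sp by blast
qed

(* ---- part 12 ---- *)
lemma lower_one:
  assumes pf: "pure_fam W X psi" and sp: "spec X psi P B lam"
    and mixeq: "mixture W X P = mix.rho X psi P"
    and eps: "0 < eps" "eps < 1" and d1: "0 < d1" and d2: "0 < d2"
  shows "Hs (eps - d1 - d2) (mixture W X P) \<le> ereal (ln (real (Mdist W X eps)) + ln ((1 - eps) / (d1 * d2)))"
proof -
  interpret pf: pure_fam W X psi by (rule pf)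
  interpret sp: spec X psi P B lam by (rule sp)
  let ?M = "Mdist W X eps"
  have Mp: "\<And>N. distinguishable W X eps N \<Longrightarrow> N \<le> ?M" "?M \<ge> 1"
    using pf.Mdist_props eps by auto
  show ?thesis unfolding Hs_def
  proof (rule Sup_least)
    fix y assume "y \<in> {ereal lm |lm. Re (trace (mixture W X P ** proj_ge (mixture W X P) (exp (- lm)))) \<le> eps - d1 - d2}"
    then obtain lm where y: "y = ereal lm"
      and T: "Re (trace (mixture W X P ** proj_ge (mixture W X P) (exp (- lm)))) \<le> eps - d1 - d2" by blast
    define c where "c = exp (- lm)"
    have c: "c > 0" by (simp add: c_def)
    have Tc: "sp.Tc c \<le> eps - d1 - d2" using T sp.Tc_trace[of c] by (simp add: mixeq c_def)
    define K where "K = nat (floor (d1 / c)) + 1"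
    define m where "m = nat (floor ((1 - eps + d2) / (1 - eps)))"
    have K1: "K \<ge> 1" by (simp add: K_def)
    have Kr: "real (K - 1) = real_of_int (floor (d1 / c))" using d1 c by (simp add: K_def)
    have Kc: "real (K - 1) * c \<le> d1"
    proof -
      have "real (K - 1) \<le> d1 / c" using Kr by linarith
      then show ?thesis using c by (simp add: field_simps)
    qed
    have Kge: "real K \<ge> d1 / c"
    proof -
      have "real K = real (K - 1) + 1" using K1 by simp
      then show ?thesis using Kr by linarith
    qed
    have q1: "(1 - eps + d2) / (1 - eps) = 1 + d2 / (1 - eps)" using eps by (simp add: field_simps)
    have m1: "m \<ge> 1"
    proof -
      have "(1 - eps + d2) / (1 - eps) \<ge> 1" using q1 eps d2 by simp
      then show ?thesis unfolding m_def by linarith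
    qed
    have mle: "real m \<le> (1 - eps + d2) / (1 - eps)" unfolding m_def
      using m1 m_def by linarith
    have mge: "real m \<ge> d2 / (1 - eps)" unfolding m_def using q1 by linarith
    have KT: "sp.Tc c + real (K - 1) * c < 1" using Tc Kc eps d2 by linarith
    obtain xs Q where povm: "povm (K * m) Q" and xsX: "\<forall>i<K * m. xs i \<in> X"
      and qual: "\<forall>i<K * m. qf (Q i) (psi (xs i)) \<ge> (1 - sp.Tc c - real (K - 1) * c) / real m"
      using sp.achieve[OF c K1 m1 KT] by blast
    define s where "s = 1 - sp.Tc c - real (K - 1) * c"
    have s: "s \<ge> 1 - eps + d2" using Tc Kc by (simp add: s_def)
    have sm: "s / real m \<ge> 1 - eps"
    proof -
      have "real m * (1 - eps) \<le> 1 - eps + d2" using mle eps by (simp add: field_simps)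
      then have "real m * (1 - eps) \<le> s" using s by linarith
      then show ?thesis using m1 by (simp add: field_simps)
    qed
    have Npos: "K * m > 0" using K1 m1 by simp
    have dist: "distinguishable W X eps (K * m)"
      unfolding distinguishable_def
    proof (intro exI conjI)
      show "\<forall>i<K * m. xs i \<in> X" by fact
      show "povm (K * m) Q" by fact
      have "(\<Sum>i<K * m. Re (trace (W (xs i) ** (mat 1 - Q i)))) = (\<Sum>i<K * m. 1 - qf (Q i) (psi (xs i)))"
        using xsX pf.err by (intro sum.cong refl) auto
      also have "\<dots> \<le> (\<Sum>i<K * m. 1 - s / real m)"
        using qual by (intro sum_mono) (auto simp: s_def)
      also have "\<dots> = real (K * m) * (1 - s / real m)" by simp
      finally have "(1 / real (K * m)) * (\<Sum>i<K * m. Re (trace (W (xs i) ** (mat 1 - Q i)))) \<le> 1 - s / real m"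
        using Npos by (simp add: field_simps)
      also have "\<dots> \<le> eps" using sm by simp
      finally show "(1 / real (K * m)) * (\<Sum>i<K * m. Re (trace (W (xs i) ** (mat 1 - Q i)))) \<le> eps" .
    qed
    have KmM: "real K * real m \<le> real ?M" using Mp(1)[OF dist] by (simp flip: of_nat_mult)
    have "(d1 / c) * (d2 / (1 - eps)) \<le> real K * real m"
      using Kge mge d1 d2 eps c by (intro mult_mono) auto
    then have "(d1 / c) * (d2 / (1 - eps)) \<le> real ?M" using KmM by linarith
    then have ineq: "1 / c \<le> real ?M * ((1 - eps) / (d1 * d2))"
      using d1 d2 eps c by (simp add: field_simps)
    have pos: "0 < 1 / c" using c by simp
    have pos2: "0 < real ?M * ((1 - eps) / (d1 * d2))" using pos ineq by linarith
    have "lm = ln (1 / c)" by (simp add: c_def ln_div)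
    also have "\<dots> \<le> ln (real ?M * ((1 - eps) / (d1 * d2)))"
      using ineq ln_le_cancel_iff[OF pos pos2] by blast
    finally have "lm \<le> ln (real ?M * ((1 - eps) / (d1 * d2)))" .
    also have "\<dots> = ln (real ?M) + ln ((1 - eps) / (d1 * d2))"
    proof (rule ln_mult_pos)
      show "0 < real ?M" using Mp(2) by simp
      show "0 < (1 - eps) / (d1 * d2)" using eps d1 d2 by simp
    qed
    finally show "y \<le> ereal (ln (real ?M) + ln ((1 - eps) / (d1 * d2)))" by (simp add: y)
  qed
qed

(* ---- part 13 ---- *)
lemma upper_exists:
  fixes W :: "'x \<Rightarrow> complex^'n^'n" and X :: "'x set" and psi :: "'x \<Rightarrow> complex^'n"
  assumes pf: "pure_fam W X psi"
    and eps: "0 < eps" "eps < 1" and d1: "0 < d1" and d2: "0 < d2"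
  shows "\<exists>P\<in>distributions X. ereal (ln (real (Mdist W X eps)) + ln (d1 * d2^2)) \<le> Hs (eps + d1 + 2 * d2) (mixture W X P)"
proof -
  interpret pf: pure_fam W X psi by (rule pf)
  let ?M = "Mdist W X eps"
  let ?e = "eps + d1 + 2 * d2"
  let ?lm = "ln (real ?M) + ln (d1 * d2^2)"
  have Mp: "distinguishable W X eps ?M" "?M \<ge> 1"
    using pf.Mdist_props eps by auto
  have hs: "ereal ?lm \<le> Hs ?e (mixture W X P)"
    if "Re (trace (mixture W X P ** proj_ge (mixture W X P) (exp (- ?lm)))) \<le> ?e" for P
    unfolding Hs_def by (rule Sup_upper) (use that in blast)
  show ?thesis
  proof (cases "?e \<ge> 1")
    case True
    define P0 :: "'x \<Rightarrow> real" where "P0 = (\<lambda>x. 1 / real (card X))"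
    have P0: "P0 \<in> distributions X"
      using pf.finX pf.neX by (simp add: distributions_def P0_def)
    obtain B lam where sp: "spec X psi P0 B lam" and mixeq: "mixture W X P0 = mix.rho X psi P0"
      using spec_exists[OF pf P0] by blast
    interpret sp: spec X psi P0 B lam by (rule sp)
    have "Re (trace (mixture W X P0 ** proj_ge (mixture W X P0) (exp (- ?lm)))) \<le> ?e"
      using sp.Tc_trace sp.Tc_bounds(2)[of "exp (- ?lm)"] True by (simp add: mixeq)
    then show ?thesis using hs P0 by blast
  next
    case False
    then have d2l: "d2 < 1" using eps d1 by simp
    obtain xs Q where xs: "\<forall>i<?M. xs i \<in> X" and povm: "povm ?M Q"
      and succ: "real ?M * (1 - eps) \<le> (\<Sum>i<?M. qf (Q i) (psi (xs i)))"
      using pf.dist_success[OF Mp(1)] Mp(2) by auto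
    have Mpos: "?M > 0" using Mp(2) by simp
    define P where "P x = real (card {i. i < ?M \<and> xs i = x}) / real ?M" for x
    have P: "P \<in> distributions X"
    proof -
      have "(\<Sum>x\<in>X. P x) = (\<Sum>x\<in>X. (real (card {i. i < ?M \<and> xs i = x}) / real ?M) * 1)"
        by (simp add: P_def)
      also have "\<dots> = (\<Sum>i<?M. 1) / real ?M" by (rule empirical_avg[OF pf.finX xs Mpos])
      also have "\<dots> = 1" using Mpos by simp
      finally show ?thesis by (simp add: distributions_def P_def)
    qed
    obtain B lam where sp: "spec X psi P B lam" and mixeq: "mixture W X P = mix.rho X psi P"
      using spec_exists[OF pf P] by blast
    interpret sp: spec X psi P B lam by (rule sp)
    define c where "c = 1 / (real ?M * d1 * d2^2)"
    have c: "c > 0" using Mpos d1 d2 by (simp add: c_def)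
    have ec: "exp (- ?lm) = c"
    proof -
      have "exp (- ?lm) = 1 / exp ?lm" by (simp only: exp_minus inverse_eq_divide)
      also have "exp ?lm = real ?M * (d1 * d2^2)" using Mpos d1 d2 by (simp add: exp_add)
      finally show ?thesis by (simp add: c_def mult.assoc)
    qed
    have conv: "(\<Sum>i<?M. qf (Q i) (psi (xs i))) \<le> (1 + 1 / d2) * real (card (sp.Sc c)) + (1 + 1 / (1 / d2)) * (real ?M - real ?M * sp.Tc c)"
      using sp.converse_core[OF povm Mpos xs, of "1 / d2" c] d2 by (simp add: P_def)
    have cS: "real (card (sp.Sc c)) \<le> real ?M * d1 * d2^2"
    proof -
      have "c * real (card (sp.Sc c)) \<le> 1" using sp.card_Sc[of c] sp.Tc_bounds(2)[of c] by linarith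
      then show ?thesis using c Mpos d1 d2 by (simp add: c_def field_simps)
    qed
    have Te: "sp.Tc c \<le> ?e"
      using arith_up[OF _ d1 d2 d2l _ _ cS] Mpos eps succ conv by auto
    have "Re (trace (mixture W X P ** proj_ge (mixture W X P) (exp (- ?lm)))) \<le> ?e"
      unfolding ec mixeq using sp.Tc_trace[of c] Te by simp
    then show ?thesis using hs P by blast
  qed
qed

(* ---- part 14 ---- *)
theorem mainTheorem5:
  fixes X :: "'x set" and W :: "'x \<Rightarrow> complex^'n^'n"
    and eps d1 d2 :: real
  assumes "finite X" and "X \<noteq> {}"
    and "\<forall>x\<in>X. pure_state (W x)"
    and "0 < eps" and "eps < 1" and "0 < d1" and "0 < d2"
  shows "(ereal (ln (real (Mdist W X eps))) \<ge>
           (SUP P\<in>distributions X. Hs (eps - d1 - d2) (mixture W X P))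
             - ereal (ln ((1 - eps) / (d1 * d2)))) \<and>
         (ereal (ln (real (Mdist W X eps))) \<le>
           (SUP P\<in>distributions X. Hs (eps + d1 + 2 * d2) (mixture W X P))
             + ereal (ln (1 / (d1 * d2^2))))"
proof -
  define psi where "psi x = (SOME v. norm v = 1 \<and> W x = outer v v)" for x
  have psi: "norm (psi x) = 1 \<and> W x = outer (psi x) (psi x)" if "x \<in> X" for x
  proof -
    have "\<exists>v. norm v = 1 \<and> W x = outer v v" using assms(3) that by (simp add: pure_state_def)
    then show ?thesis unfolding psi_def by (rule someI_ex)
  qed
  have pf: "pure_fam W X psi" unfolding pure_fam_def using assms(1,2) psi by blast
  let ?M = "Mdist W X eps"
  have part1: "(SUP P\<in>distributions X. Hs (eps - d1 - d2) (mixture W X P))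
      \<le> ereal (ln (real ?M) + ln ((1 - eps) / (d1 * d2)))"
  proof (rule SUP_least)
    fix P assume P: "P \<in> distributions X"
    obtain B lam where sp: "spec X psi P B lam" and mixeq: "mixture W X P = mix.rho X psi P"
      using spec_exists[OF pf P] by blast
    show "Hs (eps - d1 - d2) (mixture W X P) \<le> ereal (ln (real ?M) + ln ((1 - eps) / (d1 * d2)))"
      by (rule lower_one[OF pf sp mixeq assms(4-7)])
  qed
  have part2: "ereal (ln (real ?M) - ln (1 / (d1 * d2^2)))
      \<le> (SUP P\<in>distributions X. Hs (eps + d1 + 2 * d2) (mixture W X P))"
  proof -
    obtain P where P: "P \<in> distributions X"
      and h: "ereal (ln (real ?M) + ln (d1 * d2^2)) \<le> Hs (eps + d1 + 2 * d2) (mixture W X P)"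
      using upper_exists[OF pf assms(4-7)] by blast
    have e: "ln (real ?M) - ln (1 / (d1 * d2^2)) = ln (real ?M) + ln (d1 * d2^2)"
      using assms(6,7) by (simp add: ln_div)
    have "ereal (ln (real ?M) - ln (1 / (d1 * d2^2))) \<le> Hs (eps + d1 + 2 * d2) (mixture W X P)"
      unfolding e by (rule h)
    also have "\<dots> \<le> (SUP P\<in>distributions X. Hs (eps + d1 + 2 * d2) (mixture W X P))"
      using P by (rule SUP_upper)
    finally show ?thesis .
  qed
  show ?thesis
  proof
    show "(SUP P\<in>distributions X. Hs (eps - d1 - d2) (mixture W X P)) - ereal (ln ((1 - eps) / (d1 * d2)))
        \<le> ereal (ln (real ?M))"
      using part1 by (rule ereal_minus_le_aux)
    show "ereal (ln (real ?M)) \<le> (SUP P\<in>distributions X. Hs (eps + d1 + 2 * d2) (mixture W X P))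
        + ereal (ln (1 / (d1 * d2^2)))"
      using part2 by (rule ereal_le_plus_aux)
  qed
qed

end
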